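(* Let $b$ be a prime, $m\ge 5$ an integer, $N=b^m$, let $(\gamma_j)_{j\ge1}$ be a non-increasing sequence of weights with $0<\gamma_j\le 1$, and let $0\le w_1\le w_2\le\cdots$ be integers. Then there exists a generating vector $\mathbf{z}=(b^{w_1}z_1,\dots,b^{w_s}z_s)$ with $z_j\in\mathcal{Z}_{N,w_j}$ for all $j\in[s]$ such that the lattice point set $P_N(\mathbf{z})$ satisfies \begin{align*} D_{N,\boldsymbol{\gamma}}^*(\mathbf{z}) &\le \sum_{\mathfrak{u}\subseteq[s]}\gamma_{\mathfrak{u}}\left(1-\left(1-\frac1N\right)^{|\mathfrak{u}|}\right) + \frac12\Bigg(\frac1N\prod_{j=1}^s(\beta_j+\gamma_jS_N) \\ &\quad + \frac1N\sum_{p=0}^{m-1} b^{m-p-1}(b-1)\prod_{\substack{j=1\\ w_j\ge m-p}}^{s}(\beta_j+\gamma_jS_N)\prod_{\substack{j=1\\ w_j<m-p}}^{s}\beta_j - \prod_{j=1}^s\beta_j\Bigg), \end{align*} where $\beta_j=1+\gamma_j$.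
   Context: Notation: $[s]=\{1,\dots,s\}$. Product weights: $\gamma_{\mathfrak{u}}=\prod_{j\in\mathfrak{u}}\gamma_j$ for $\mathfrak{u}\subseteq[s]$, $\gamma_\emptyset=1$. For an integer $w\ge0$, $\mathcal{Z}_{N,w}=\{z\in\{1,\dots,b^{m-w}-1\}:\gcd(z,b^m)=1\}$ if $w<m$, and $\mathcal{Z}_{N,w}=\{1\}$ if $w\ge m$. For $\mathbf{z}\in\mathbb{Z}^s$ the lattice point set is $P_N(\mathbf{z})=\{\{k\mathbf{z}/N\}:k=0,\dots,N-1\}$ (fractional parts componentwise). For a point set $P_N$ of $N$ points in $[0,1)^s$ and $\mathbf{x}\in[0,1]^s$, $\mathrm{discr}(\mathbf{x},P_N)=\frac1N\#\{\mathbf{p}\in P_N:\mathbf{p}\in[\mathbf{0},\mathbf{x})\}-\prod_{j=1}^s x_j$. The weighted star discrepancy is $D^*_{N,\boldsymbol\gamma}(\mathbf{z})=\sup_{\mathbf{x}\in(0,1]^s}\max_{\emptyset\ne\mathfrak{u}\subseteq[s]}\gamma_{\mathfrak{u}}|\mathrm{discr}((\mathbf{x}_{\mathfrak{u}},\mathbf{1}),P_N(\mathbf{z}))|$, where $(\mathbf{x}_{\mathfrak{u}},\mathbf{1})$ has $j$-th coordinate $x_j$ for $j\in\mathfrak{u}$ and $1$ otherwise. $S_N=\sum_{-N/2<h\le N/2,\,h\ne0}\frac{1}{|h|}$. *)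

theory Defs
  imports "HOL-Analysis.Analysis"
begin

definition prod_weight :: "(nat \<Rightarrow> real) \<Rightarrow> nat set \<Rightarrow> real" where
  "prod_weight \<gamma> u = (\<Prod>j\<in>u. \<gamma> j)"

definition Zset :: "nat \<Rightarrow> nat \<Rightarrow> nat \<Rightarrow> nat set" where
  "Zset b m w = (if w < m then {z \<in> {1..b ^ (m - w) - 1}. coprime z (b ^ m)} else {1})"

text \<open>Local discrepancy of the lattice point set P_N(z) (points counted with
  multiplicity, k = 0..N-1) at the box [0,x) in dimension s (coordinates 1..s).\<close>
definition discr :: "nat \<Rightarrow> nat \<Rightarrow> (nat \<Rightarrow> nat) \<Rightarrow> (nat \<Rightarrow> real) \<Rightarrow> real" where
  "discr N s z x =
     real (card {k \<in> {0..<N}. \<forall>j\<in>{1..s}. frac (real k * real (z j) / real N) < x j}) / real N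
     - (\<Prod>j\<in>{1..s}. x j)"

definition weighted_star_discr :: "nat \<Rightarrow> nat \<Rightarrow> (nat \<Rightarrow> real) \<Rightarrow> (nat \<Rightarrow> nat) \<Rightarrow> real" where
  "weighted_star_discr N s \<gamma> z =
     Sup {prod_weight \<gamma> u * \<bar>discr N s z (\<lambda>j. if j \<in> u then x j else 1)\<bar> | x u.
            (\<forall>j\<in>{1..s}. 0 < x j \<and> x j \<le> 1) \<and> u \<subseteq> {1..s} \<and> u \<noteq> {}}"

definition S_N :: "nat \<Rightarrow> real" where
  "S_N N = (\<Sum>h\<in>{h::int. - real N / 2 < real_of_int h \<and> real_of_int h \<le> real N / 2 \<and> h \<noteq> 0}.
              1 / real_of_int \<bar>h\<bar>)"

end

theory Submission
  imports Defs "HOL-Computational_Algebra.Primes"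
begin

definition ee :: "real \<Rightarrow> complex" where "ee x = cis (2 * pi * x)"

lemma ee_add: "ee (x + y) = ee x * ee y"
  by (simp add: ee_def cis_mult distrib_left)

lemma ee_int: "ee (of_int k) = 1"
  by (simp add: ee_def)

lemma ee_pow: "ee x ^ n = ee (real n * x)"
  unfolding ee_def Complex.DeMoivre by (simp add: algebra_simps)

lemma ee_eq_1_iff: "ee x = 1 \<longleftrightarrow> x \<in> \<int>"
proof
  assume "ee x = 1"
  then have "cos (2*pi*x) = 1" unfolding ee_def by (metis cis.sel(1) one_complex.sel(1))
  then obtain n :: int where "2*pi*x = of_int n*2*pi" using cos_one_2pi_int by auto
  then have "x = of_int n" by simp
  then show "x \<in> \<int>" by simp
next
  assume "x \<in> \<int>" then show "ee x = 1" unfolding ee_def by simp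
qed

lemma ee_shift: "ee (x + of_int k) = ee x"
  by (simp add: ee_add ee_int)

lemma norm_ee[simp]: "norm (ee x) = 1" by (simp add: ee_def)

lemma root_sum:
  fixes n :: nat and d :: int
  assumes "n > 0"
  shows "(\<Sum>r<n. ee (real r * of_int d / real n)) = (if int n dvd d then of_nat n else 0)"
proof (cases "int n dvd d")
  case True
  then obtain q where q: "d = int n * q" by blast
  have "ee (real r * of_int d / real n) = 1" for r
  proof -
    have "real r * of_int d / real n = of_int (int r * q)" using assms by (simp add: q field_simps)
    then show ?thesis by (metis ee_int)
  qed
  then show ?thesis using True by simp
next
  case False
  define \<omega> where "\<omega> = ee (of_int d / real n)"
  have pw: "ee (real r * of_int d / real n) = \<omega> ^ r" for r
    by (simp add: \<omega>_def ee_pow)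
  have "\<omega> \<noteq> 1"
  proof
    assume "\<omega> = 1"
    then have "of_int d / real n \<in> \<int>" by (simp add: \<omega>_def ee_eq_1_iff)
    then obtain q where "of_int d / real n = of_int q" by (elim Ints_cases)
    then have "of_int d = real n * of_int q" using assms by (simp add: field_simps)
    then have "d = int n * q" by (metis of_int_eq_iff of_int_mult of_int_of_nat_eq)
    then show False using False by simp
  qed
  have "\<omega> ^ n = 1" using assms by (simp add: \<omega>_def ee_pow ee_int)
  then have "(\<Sum>r<n. \<omega> ^ r) = 0" using \<open>\<omega> \<noteq> 1\<close> by (simp add: geometric_sum)
  then show ?thesis using False pw by simp
qed

definition CN :: "nat \<Rightarrow> int set" where
  "CN n = {h. - real n / 2 < real_of_int h \<and> real_of_int h \<le> real n / 2}"

definition gC :: "nat \<Rightarrow> nat \<Rightarrow> int" where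
  "gC n r = (if 2 * r \<le> n then int r else int r - int n)"

lemma CN_iff: "h \<in> CN n \<longleftrightarrow> - int n < 2 * h \<and> 2 * h \<le> int n"
proof -
  have "- real n / 2 < real_of_int h \<longleftrightarrow> - int n < 2 * h" by linarith
  moreover have "real_of_int h \<le> real n / 2 \<longleftrightarrow> 2 * h \<le> int n" by linarith
  ultimately show ?thesis unfolding CN_def by auto
qed

lemma bij_gC: "n > 0 \<Longrightarrow> bij_betw (gC n) {..<n} (CN n)"
proof (rule bij_betw_byWitness[where f' = "\<lambda>h. nat (h mod int n)"])
  assume n: "n > 0"
  show "\<forall>r\<in>{..<n}. nat (gC n r mod int n) = r"
  proof
    fix r assume "r \<in> {..<n}"
    then show "nat (gC n r mod int n) = r" unfolding gC_def
      by (auto simp: mod_pos_pos_trivial)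
  qed
  show "\<forall>h\<in>CN n. gC n (nat (h mod int n)) = h"
  proof
    fix h assume h: "h \<in> CN n"
    then have h1: "- int n < 2 * h" "2 * h \<le> int n" by (auto simp: CN_iff)
    show "gC n (nat (h mod int n)) = h"
    proof (cases "h \<ge> 0")
      case True
      then have "h mod int n = h" using h1 by (intro mod_pos_pos_trivial) auto
      then show ?thesis using True h1 unfolding gC_def by auto
    next
      case False
      then have "h mod int n = h + int n" using h1
        by (smt (verit, best) mod_add_self2 mod_pos_pos_trivial)
      then show ?thesis using False h1 unfolding gC_def by auto
    qed
  qed
  show "gC n ` {..<n} \<subseteq> CN n" by (auto simp: gC_def CN_iff)
  show "(\<lambda>h. nat (h mod int n)) ` CN n \<subseteq> {..<n}"
  proof
    fix y assume "y \<in> (\<lambda>h. nat (h mod int n)) ` CN n"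
    then obtain h where y: "y = nat (h mod int n)" by auto
    have "0 \<le> h mod int n" "h mod int n < int n" using n by auto
    then show "y \<in> {..<n}" using y by (simp add: nat_less_iff)
  qed
qed

lemma finite_CN[simp]: "finite (CN n)"
proof -
  have "CN n \<subseteq> {-int n..int n}"
  proof
    fix h assume "h \<in> CN n"
    then have "-int n < 2*h" "2*h \<le> int n" by (simp_all add: CN_iff)
    then show "h \<in> {-int n..int n}" by simp
  qed
  then show ?thesis using finite_subset by blast
qed

lemma card_CN: assumes "n > 0" shows "card (CN n) = n"
  using bij_betw_same_card[OF bij_gC[OF assms]] by simp

lemma zero_CN: "n > 0 \<Longrightarrow> 0 \<in> CN n" unfolding CN_iff by simp

lemma CN_abs: "h \<in> CN n \<Longrightarrow> 2 * \<bar>h\<bar> \<le> int n" unfolding CN_iff by auto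

lemma CN_dvd: "h \<in> CN n \<Longrightarrow> int n dvd h \<Longrightarrow> h = 0"
proof -
  assume h: "h \<in> CN n" "int n dvd h"
  then obtain q where q: "h = int n * q" by blast
  show "h = 0"
  proof (rule ccontr)
    assume "h \<noteq> 0"
    then have "q \<noteq> 0" "n > 0" using q by auto
    then have "\<bar>h\<bar> \<ge> int n" using q by (simp add: abs_mult)
    then show False using CN_abs[OF h(1)] \<open>n > 0\<close> by linarith
  qed
qed

lemma CN_root_sum:
  fixes d :: int assumes "n > 0"
  shows "(\<Sum>h\<in>CN n. ee (of_int h * of_int d / real n)) = (if int n dvd d then of_nat n else 0)"
proof -
  have "(\<Sum>h\<in>CN n. ee (of_int h * of_int d / real n)) = (\<Sum>r<n. ee (of_int (gC n r) * of_int d / real n))"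
    using sum.reindex_bij_betw[OF bij_gC[OF assms], symmetric] by simp
  also have "\<dots> = (\<Sum>r<n. ee (real r * of_int d / real n))"
  proof (rule sum.cong[OF refl])
    fix r
    have "of_int (int r - int n) * of_int d / real n = real r * of_int d / real n + of_int (- d)"
      using assms by (simp add: field_simps)
    then show "ee (of_int (gC n r) * of_int d / real n) = ee (real r * of_int d / real n)"
      unfolding gC_def using ee_shift[of _ "-d"] by auto
  qed
  also have "\<dots> = (if int n dvd d then of_nat n else 0)" by (rule root_sum[OF assms])
  finally show ?thesis .
qed

lemma S_N_CN: "S_N n = (\<Sum>h\<in>CN n - {0}. 1 / real_of_int \<bar>h\<bar>)"
  unfolding S_N_def CN_def by (rule sum.cong) auto

lemma jordan:
  fixes x :: real assumes "0 \<le> x" "x \<le> 1/2"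
  shows "2 * x \<le> sin (pi * x)"
proof (rule ccontr)
  assume neg: "\<not> 2 * x \<le> sin (pi * x)"
  define g where "g t = sin (pi * t) - 2 * t" for t :: real
  define g' where "g' t = pi * cos (pi * t) - 2" for t :: real
  have der: "DERIV g t :> g' t" for t
    unfolding g_def g'_def by (auto intro!: derivative_eq_intros)
  have gx: "g x < 0" using neg by (simp add: g_def)
  have x0: "0 < x" using neg assms by (cases "x = 0") auto
  have x1: "x < 1/2" using neg assms by (cases "x = 1/2") auto
  obtain c1 where c1: "0 < c1" "c1 < x" "g x - g 0 = (x - 0) * g' c1"
    using MVT2[OF x0 der] by blast
  obtain c2 where c2: "x < c2" "c2 < 1/2" "g (1/2) - g x = (1/2 - x) * g' c2"
    using MVT2[OF x1 der] by blast
  have "g 0 = 0" "g (1/2) = 0" by (simp_all add: g_def)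
  have "g' c1 < 0"
  proof -
    have "x * g' c1 < 0" using c1 gx \<open>g 0 = 0\<close> by simp
    then show ?thesis using x0 by (simp add: mult_less_0_iff)
  qed
  moreover have "g' c2 > 0"
  proof -
    have "(1/2 - x) * g' c2 > 0" using c2 gx \<open>g (1/2) = 0\<close> by simp
    then show ?thesis using x1 by (simp add: zero_less_mult_iff)
  qed
  moreover have "cos (pi * c2) \<le> cos (pi * c1)"
    by (rule cos_monotone_0_pi_le) (use c1 c2 in auto)
  ultimately show False unfolding g'_def by (smt (verit) pi_gt_zero mult_left_mono)
qed

lemma jordan_abs:
  fixes y :: real assumes "\<bar>y\<bar> \<le> 1/2"
  shows "2 * \<bar>y\<bar> \<le> \<bar>sin (pi * y)\<bar>"
proof (cases "y \<ge> 0")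
  case True
  then have "2 * y \<le> sin (pi * y)" using jordan assms by auto
  then show ?thesis using True by auto
next
  case False
  then have "2 * (-y) \<le> sin (pi * (-y))" using jordan[of "-y"] assms by auto
  then show ?thesis using False by auto
qed

lemma aux_id: "(1 - 2 * (s::real) ^ 2 - 1)^2 + (2 * s * c)^2 = 4 * s^2 * (s^2 + c^2)"
  by (simp add: algebra_simps power2_eq_square)

lemma norm_cis_minus_1: "norm (cis t - 1) = 2 * \<bar>sin (t/2)\<bar>"
proof -
  have t: "t = 2 * (t/2)" by simp
  have c: "cos t = 1 - 2 * sin (t/2) ^ 2" by (subst t, rule cos_double_sin)
  have s: "sin t = 2 * sin (t/2) * cos (t/2)" by (subst t, rule sin_double)
  have "(norm (cis t - 1))^2 = (cos t - 1)^2 + (sin t)^2"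
    by (simp add: cmod_def)
  also have "\<dots> = 4 * (sin (t/2))^2 * ((sin (t/2))^2 + (cos (t/2))^2)"
    unfolding c s by (rule aux_id)
  also have "\<dots> = 4 * (sin (t/2))^2" by (simp only: sin_cos_squared_add mult_1_right)
  also have "\<dots> = (2 * \<bar>sin (t/2)\<bar>)^2" by (simp add: power_mult_distrib)
  finally show ?thesis
    using power2_eq_iff_nonneg[of "norm (cis t - 1)" "2 * \<bar>sin (t/2)\<bar>"] by simp
qed

lemma coef_bound:
  fixes n a :: nat and h :: int
  assumes n: "n > 0" and h: "h \<in> CN n" "h \<noteq> 0"
  shows "norm (1 / of_nat n * (\<Sum>r<a. ee (- (of_int h * real r) / real n))) \<le> 1 / (2 * \<bar>of_int h\<bar>)"
proof -
  define \<omega> where "\<omega> = ee (- of_int h / real n)"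
  have pw: "ee (- (of_int h * real r) / real n) = \<omega> ^ r" for r
    by (simp add: \<omega>_def ee_pow mult.commute)
  have "\<omega> \<noteq> 1"
  proof
    assume "\<omega> = 1"
    then have "- of_int h / real n \<in> \<int>" by (simp add: \<omega>_def ee_eq_1_iff)
    then obtain q where "- of_int h / real n = of_int q" by (elim Ints_cases)
    then have "of_int h = real n * of_int (-q)" using n by (simp add: field_simps)
    then have "h = int n * (-q)" by (metis of_int_eq_iff of_int_mult of_int_of_nat_eq)
    then show False using CN_dvd[OF h(1)] h(2) by simp
  qed
  have hn: "2 * \<bar>of_int h\<bar> \<le> real n" using CN_abs[OF h(1)] by linarith
  have "norm (\<omega> - 1) = 2 * \<bar>sin (pi * (- of_int h / real n))\<bar>"
    unfolding \<omega>_def ee_def norm_cis_minus_1 by simp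
  also have "\<dots> \<ge> 2 * (2 * \<bar>- of_int h / real n\<bar>)"
    using jordan_abs[of "- of_int h / real n"] hn n by (auto simp: field_simps)
  finally have w1: "norm (\<omega> - 1) \<ge> 4 * \<bar>of_int h\<bar> / real n" using n by simp
  have hpos: "\<bar>of_int h\<bar> > (0::real)" using h by simp
  have "(\<Sum>r<a. ee (- (of_int h * real r) / real n)) = (\<omega> ^ a - 1) / (\<omega> - 1)"
    unfolding pw using \<open>\<omega> \<noteq> 1\<close> by (rule geometric_sum)
  then have "norm (\<Sum>r<a. ee (- (of_int h * real r) / real n)) = norm (\<omega> ^ a - 1) / norm (\<omega> - 1)"
    by (simp add: norm_divide)
  also have "\<dots> \<le> 2 / norm (\<omega> - 1)"
  proof (rule divide_right_mono)
    have "norm (\<omega> ^ a - 1) \<le> norm (\<omega> ^ a) + norm (1::complex)" by (rule norm_triangle_ineq4)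
    also have "\<dots> = 2" by (simp add: \<omega>_def norm_power)
    finally show "norm (\<omega> ^ a - 1) \<le> 2" .
  qed simp
  also have "\<dots> \<le> 2 / (4 * \<bar>of_int h\<bar> / real n)"
    by (rule divide_left_mono[OF w1]) (use hpos n \<open>\<omega> \<noteq> 1\<close> in auto)
  also have "\<dots> = real n / (2 * \<bar>of_int h\<bar>)" using hpos by (simp add: field_simps)
  finally have "norm (\<Sum>r<a. ee (- (of_int h * real r) / real n)) \<le> real n / (2 * \<bar>of_int h\<bar>)" .
  then have "norm (\<Sum>r<a. ee (- (of_int h * real r) / real n)) / real n \<le> (real n / (2 * \<bar>of_int h\<bar>)) / real n"
    by (rule divide_right_mono) simp
  moreover have "norm (1 / of_nat n * (\<Sum>r<a. ee (- (of_int h * real r) / real n))) = norm (\<Sum>r<a. ee (- (of_int h * real r) / real n)) / real n"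
    by (simp add: norm_divide)
  moreover have "(real n / (2 * \<bar>of_int h\<bar>)) / real n = 1 / (2 * \<bar>of_int h\<bar>)" using n by simp
  ultimately show ?thesis by simp
qed

lemma ee_0[simp]: "ee 0 = 1" by (simp add: ee_def)

lemma ee_sum: "finite I \<Longrightarrow> (\<Prod>j\<in>I. ee (x j)) = ee (\<Sum>j\<in>I. x j)"
  by (induction I rule: finite_induct) (auto simp: ee_add)

definition dual :: "nat \<Rightarrow> nat set \<Rightarrow> (nat \<Rightarrow> nat) \<Rightarrow> (nat \<Rightarrow> int) \<Rightarrow> 'a::comm_ring_1" where
  "dual N I v H = (if int N dvd (\<Sum>j\<in>I. H j * int (v j)) then 1 else 0)"

lemma exchange:
  fixes f :: "nat \<Rightarrow> int \<Rightarrow> complex"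
  assumes N: "N > 0" and I: "finite I"
  shows "(\<Sum>H\<in>PiE I (\<lambda>_. CN N). dual N I v H * (\<Prod>j\<in>I. f j (H j)))
       = 1 / of_nat N * (\<Sum>k<N. \<Prod>j\<in>I. \<Sum>h\<in>CN N. f j h * ee (of_int h * real k * real (v j) / real N))"
proof -
  have "(\<Sum>k<N. \<Prod>j\<in>I. \<Sum>h\<in>CN N. f j h * ee (of_int h * real k * real (v j) / real N))
      = (\<Sum>k<N. \<Sum>H\<in>PiE I (\<lambda>_. CN N). \<Prod>j\<in>I. f j (H j) * ee (of_int (H j) * real k * real (v j) / real N))"
    by (rule sum.cong[OF refl], rule prod_sum_PiE) (use I in auto)
  also have "\<dots> = (\<Sum>H\<in>PiE I (\<lambda>_. CN N). \<Sum>k<N. (\<Prod>j\<in>I. f j (H j)) * ee (real k * of_int (\<Sum>j\<in>I. H j * int (v j)) / real N))"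
  proof (subst sum.swap, rule sum.cong[OF refl], rule sum.cong[OF refl])
    fix H k
    have "(\<Prod>j\<in>I. f j (H j) * ee (of_int (H j) * real k * real (v j) / real N))
        = (\<Prod>j\<in>I. f j (H j)) * (\<Prod>j\<in>I. ee (of_int (H j) * real k * real (v j) / real N))"
      by (rule prod.distrib)
    also have "(\<Prod>j\<in>I. ee (of_int (H j) * real k * real (v j) / real N))
        = ee (\<Sum>j\<in>I. of_int (H j) * real k * real (v j) / real N)" by (rule ee_sum[OF I])
    also have "(\<Sum>j\<in>I. of_int (H j) * real k * real (v j) / real N) = real k * of_int (\<Sum>j\<in>I. H j * int (v j)) / real N"
      by (simp add: sum_distrib_left sum_divide_distrib algebra_simps)
    finally show "(\<Prod>j\<in>I. f j (H j) * ee (of_int (H j) * real k * real (v j) / real N))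
        = (\<Prod>j\<in>I. f j (H j)) * ee (real k * of_int (\<Sum>j\<in>I. H j * int (v j)) / real N)" .
  qed
  also have "\<dots> = (\<Sum>H\<in>PiE I (\<lambda>_. CN N). (\<Prod>j\<in>I. f j (H j)) * (if int N dvd (\<Sum>j\<in>I. H j * int (v j)) then of_nat N else 0))"
  proof (rule sum.cong[OF refl])
    fix H
    have r: "(\<Sum>k<N. ee (real k * of_int (\<Sum>j\<in>I. H j * int (v j)) / real N)) = (if int N dvd (\<Sum>j\<in>I. H j * int (v j)) then of_nat N else 0)"
      by (rule root_sum[OF N])
    show "(\<Sum>k<N. (\<Prod>j\<in>I. f j (H j)) * ee (real k * of_int (\<Sum>j\<in>I. H j * int (v j)) / real N)) =
         (\<Prod>j\<in>I. f j (H j)) * (if int N dvd (\<Sum>j\<in>I. H j * int (v j)) then of_nat N else 0)"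
      by (simp only: sum_distrib_left[symmetric] r)
  qed
  finally show ?thesis using N unfolding dual_def
    by (simp add: sum_distrib_left) (rule sum.cong[OF refl], auto)
qed

definition coef :: "nat \<Rightarrow> nat \<Rightarrow> int \<Rightarrow> complex" where
  "coef N a h = 1 / of_nat N * (\<Sum>r<a. ee (- (of_int h * real r) / real N))"

lemma coef_0: "coef N a 0 = of_nat a / of_nat N"
  by (simp add: coef_def)

lemma coef_N: "N > 0 \<Longrightarrow> h \<in> CN N \<Longrightarrow> h \<noteq> 0 \<Longrightarrow> coef N N h = 0"
proof -
  assume N: "N > 0" and h: "h \<in> CN N" "h \<noteq> 0"
  have "(\<Sum>r<N. ee (- (of_int h * real r) / real N)) = (\<Sum>r<N. ee (real r * of_int (-h) / real N))"
    by (rule sum.cong) (auto simp: algebra_simps)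
  also have "\<dots> = 0" using root_sum[OF N, of "-h"] CN_dvd[OF h(1)] h(2) by auto
  finally show ?thesis by (simp add: coef_def)
qed

lemma indicator_fourier:
  assumes N: "N > 0" and t: "t < N" and a: "a \<le> N"
  shows "(\<Sum>h\<in>CN N. coef N a h * ee (of_int h * real t / real N)) = (if t < a then 1 else 0)"
proof -
  have "(\<Sum>h\<in>CN N. coef N a h * ee (of_int h * real t / real N))
      = 1 / of_nat N * (\<Sum>r<a. \<Sum>h\<in>CN N. ee (of_int h * of_int (int t - int r) / real N))"
  proof -
    have "coef N a h * ee (of_int h * real t / real N) = 1 / of_nat N * (\<Sum>r<a. ee (of_int h * of_int (int t - int r) / real N))" for h
    proof -
      have "ee (- (of_int h * real r) / real N) * ee (of_int h * real t / real N) = ee (of_int h * of_int (int t - int r) / real N)" for r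
        by (subst ee_add[symmetric]) (simp add: algebra_simps diff_divide_distrib)
      then show ?thesis unfolding coef_def by (simp add: sum_distrib_right)
    qed
    then have "(\<Sum>h\<in>CN N. coef N a h * ee (of_int h * real t / real N))
       = (\<Sum>h\<in>CN N. 1 / of_nat N * (\<Sum>r<a. ee (of_int h * of_int (int t - int r) / real N)))"
      by (simp only:)
    also have "\<dots> = 1 / of_nat N * (\<Sum>h\<in>CN N. \<Sum>r<a. ee (of_int h * of_int (int t - int r) / real N))"
      by (simp only: sum_distrib_left)
    also have "\<dots> = 1 / of_nat N * (\<Sum>r<a. \<Sum>h\<in>CN N. ee (of_int h * of_int (int t - int r) / real N))"
      by (subst sum.swap) (rule refl)
    finally show ?thesis .
  qed
  also have "\<dots> = 1 / of_nat N * (\<Sum>r<a. if r = t then of_nat N else 0)"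
  proof -
    have "int N dvd (int t - int r) \<longleftrightarrow> r = t" if "r < a" for r
    proof
      assume "int N dvd (int t - int r)"
      then obtain q where q: "int t - int r = int N * q" by blast
      have "\<bar>int t - int r\<bar> < int N" using t that a by auto
      then have "q = 0" using q N by (cases "q = 0") (auto simp: abs_mult)
      then show "r = t" using q by simp
    qed simp
    then have "(\<Sum>h\<in>CN N. ee (of_int h * of_int (int t - int r) / real N)) = (if r = t then of_nat N else 0)"
      if "r < a" for r
      using CN_root_sum[OF N, of "int t - int r"] that by simp
    then show ?thesis by (intro arg_cong[where f="\<lambda>x. 1 / of_nat N * x"] sum.cong) auto
  qed
  also have "\<dots> = (if t < a then 1 else 0)" using N by (simp add: sum.delta)
  finally show ?thesis .
qed

lemma prod_indicator:
  "finite I \<Longrightarrow> (\<Prod>j\<in>I. (if Q j then 1 else 0 :: 'a::comm_semiring_1)) = (if \<forall>j\<in>I. Q j then 1 else 0)"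
  by (induction I rule: finite_induct) auto

lemma count_formula:
  assumes N: "N > 0" and I: "finite I" and a: "\<And>j. j \<in> I \<Longrightarrow> a j \<le> N"
  shows "of_nat (card {k \<in> {0..<N}. \<forall>j\<in>I. (k * v j) mod N < a j}) / of_nat N
       = (\<Sum>H\<in>PiE I (\<lambda>_. CN N). dual N I v H * (\<Prod>j\<in>I. coef N (a j) (H j)) :: complex)"
proof -
  have "of_nat (card {k \<in> {0..<N}. \<forall>j\<in>I. (k * v j) mod N < a j}) = (\<Sum>k<N. (if \<forall>j\<in>I. (k * v j) mod N < a j then 1 else 0 :: complex))"
    by (simp add: sum.inter_filter[symmetric] atLeast0LessThan)
  also have "\<dots> = (\<Sum>k<N. \<Prod>j\<in>I. \<Sum>h\<in>CN N. coef N (a j) h * ee (of_int h * real k * real (v j) / real N))"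
  proof (rule sum.cong[OF refl])
    fix k
    have "(\<Sum>h\<in>CN N. coef N (a j) h * ee (of_int h * real k * real (v j) / real N)) = (if (k * v j) mod N < a j then 1 else 0)"
      if "j \<in> I" for j
    proof -
      define q where "q = (k * v j) div N"
      have kv: "k * v j = (k * v j) mod N + N * q" unfolding q_def by simp
      have eqh: "of_int h * real k * real (v j) / real N = of_int h * real ((k * v j) mod N) / real N + of_int (h * int q)" for h
      proof -
        have "real k * real (v j) = real ((k * v j) mod N) + real N * real q"
          by (metis kv of_nat_add of_nat_mult)
        then show ?thesis using N by (simp add: field_simps)
      qed
      have eeh: "ee (of_int h * real k * real (v j) / real N) = ee (of_int h * real ((k * v j) mod N) / real N)" for h
        unfolding eqh by (rule ee_shift)
      have "(\<Sum>h\<in>CN N. coef N (a j) h * ee (of_int h * real k * real (v j) / real N))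
          = (\<Sum>h\<in>CN N. coef N (a j) h * ee (of_int h * real ((k * v j) mod N) / real N))"
        by (simp only: eeh)
      also have "\<dots> = (if (k * v j) mod N < a j then 1 else 0)"
        by (rule indicator_fourier[OF N]) (use N a that in auto)
      finally show ?thesis .
    qed
    then show "(if \<forall>j\<in>I. (k * v j) mod N < a j then 1 else 0) = (\<Prod>j\<in>I. \<Sum>h\<in>CN N. coef N (a j) h * ee (of_int h * real k * real (v j) / real N))"
      by (simp add: prod_indicator[OF I])
  qed
  finally show ?thesis using exchange[OF N I, where f="\<lambda>j. coef N (a j)" and v=v] N
    by (simp add: divide_simps)
qed

lemma frac_nat_div:
  assumes N: "N > 0"
  shows "frac (real n / real N) = real (n mod N) / real N"
proof -
  have "real n = real (n mod N) + real N * real (n div N)"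
    by (metis mod_div_mult_eq of_nat_add of_nat_mult mult.commute)
  then have "real n / real N - real (n mod N) / real N = of_int (int (n div N))"
    using N by (simp add: field_simps)
  moreover have "real (n mod N) / real N < 1" using N by simp
  ultimately show ?thesis by (subst frac_unique_iff) (auto simp del: of_int_of_nat_eq)
qed

lemma box_lemma:
  fixes x y :: "nat \<Rightarrow> real"
  assumes "finite I" "\<And>j. j \<in> I \<Longrightarrow> 0 \<le> x j \<and> x j \<le> y j \<and> y j \<le> 1"
  shows "(\<Prod>j\<in>I. y j) - (\<Prod>j\<in>I. x j) \<le> 1 - (\<Prod>j\<in>I. 1 - (y j - x j))"
  using assms
proof (induction I rule: finite_induct)
  case empty then show ?case by simp
next
  case (insert i I)
  define D where "D = (\<Prod>j\<in>I. y j) - (\<Prod>j\<in>I. x j)"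
  define P where "P = (\<Prod>j\<in>I. 1 - (y j - x j))"
  have IH: "D \<le> 1 - P" using insert by (simp add: D_def P_def)
  have xi: "0 \<le> x i" "x i \<le> y i" "y i \<le> 1" using insert by auto
  have py: "(\<Prod>j\<in>I. y j) \<le> 1" using insert by (intro prod_le_1) force+
  have px: "0 \<le> (\<Prod>j\<in>I. x j)" using insert by (intro prod_nonneg) auto
  have "P \<le> 1" unfolding P_def
  proof (intro prod_le_1)
    fix j assume "j \<in> I"
    then have "0 \<le> x j \<and> x j \<le> y j \<and> y j \<le> 1" using insert.prems by auto
    then show "0 \<le> 1 - (y j - x j) \<and> 1 - (y j - x j) \<le> 1" by auto
  qed
  have "(\<Prod>j\<in>insert i I. y j) - (\<Prod>j\<in>insert i I. x j) = x i * D + (y i - x i) * (\<Prod>j\<in>I. y j)"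
    using insert by (simp add: D_def algebra_simps)
  also have "\<dots> \<le> x i * (1 - P) + (y i - x i) * 1"
    using IH xi py by (intro add_mono mult_left_mono) auto
  also have "\<dots> \<le> (1 - (y i - x i)) * (1 - P) + (y i - x i)"
    using xi IH \<open>P \<le> 1\<close> by (intro add_mono mult_right_mono) auto
  also have "\<dots> = 1 - (1 - (y i - x i)) * P" by (simp add: algebra_simps)
  finally show ?case using insert by (simp add: P_def)
qed

lemma prod_half:
  fixes f g :: "nat \<Rightarrow> real"
  assumes "finite I" "\<And>j. j \<in> I \<Longrightarrow> 0 \<le> f j \<and> f j \<le> g j" "j0 \<in> I" "f j0 \<le> g j0 / 2"
  shows "(\<Prod>j\<in>I. f j) \<le> (\<Prod>j\<in>I. g j) / 2"
proof -
  have "(\<Prod>j\<in>I. f j) = f j0 * (\<Prod>j\<in>I - {j0}. f j)" using assms by (simp add: prod.remove)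
  also have "\<dots> \<le> (g j0 / 2) * (\<Prod>j\<in>I - {j0}. g j)"
    using assms by (intro mult_mono prod_mono prod_nonneg) force+
  also have "\<dots> = (\<Prod>j\<in>I. g j) / 2" using assms by (simp add: prod.remove)
  finally show ?thesis .
qed

definition rho :: "(nat \<Rightarrow> real) \<Rightarrow> nat \<Rightarrow> int \<Rightarrow> real" where
  "rho \<gamma> j h = (if h = 0 then 1 + \<gamma> j else \<gamma> j / real_of_int \<bar>h\<bar>)"

definition Gsum :: "nat \<Rightarrow> nat set \<Rightarrow> (nat \<Rightarrow> nat) \<Rightarrow> (nat \<Rightarrow> real) \<Rightarrow> real" where
  "Gsum N I v \<gamma> = (\<Sum>H\<in>PiE I (\<lambda>_. CN N). dual N I v H * (\<Prod>j\<in>I. rho \<gamma> j (H j)))"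

lemma dual_complex: "(dual N I v H :: complex) = of_real (dual N I v H)"
  by (simp add: dual_def)

lemma dual_nonneg: "0 \<le> (dual N I v H :: real)" by (simp add: dual_def)
lemma dual_le1: "(dual N I v H :: real) \<le> 1" by (simp add: dual_def)

lemma rho_nonneg: "0 < \<gamma> j \<Longrightarrow> 0 \<le> rho \<gamma> j h" by (simp add: rho_def)

lemma coef_norm_0: "N > 0 \<Longrightarrow> a \<le> N \<Longrightarrow> norm (coef N a 0) \<le> 1"
  by (simp add: coef_0 norm_divide)

lemma disc_elem:
  fixes N s :: nat and v :: "nat \<Rightarrow> nat" and \<gamma> x :: "nat \<Rightarrow> real" and u :: "nat set"
  assumes N: "N > 0"
    and \<gamma>: "\<And>j. j \<in> {1..s} \<Longrightarrow> 0 < \<gamma> j \<and> \<gamma> j \<le> 1"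
    and u: "u \<subseteq> {1..s}"
    and x: "\<And>j. j \<in> {1..s} \<Longrightarrow> 0 < x j \<and> x j \<le> 1"
  shows "prod_weight \<gamma> u * \<bar>discr N s v (\<lambda>j. if j \<in> u then x j else 1)\<bar>
     \<le> prod_weight \<gamma> u * (1 - (1 - 1 / real N) ^ card u) + 1 / 2 * (Gsum N {1..s} v \<gamma> - (\<Prod>j\<in>{1..s}. 1 + \<gamma> j))"
proof -
  define I where "I = {1..s}"
  have I: "finite I" by (simp add: I_def)
  define x' where "x' j = (if j \<in> u then x j else 1)" for j
  define a where "a j = nat \<lceil>real N * x' j\<rceil>" for j
  have x': "0 < x' j \<and> x' j \<le> 1" if "j \<in> I" for j using x[of j] that by (auto simp: x'_def I_def)
  have a1: "real N * x' j \<le> real (a j)" "real (a j) < real N * x' j + 1" "a j \<le> N" if "j \<in> I" for j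
  proof -
    have pos: "0 < real N * x' j" using x'[OF that] N by simp
    have "real (a j) = of_int \<lceil>real N * x' j\<rceil>" unfolding a_def using pos by simp
    then show "real N * x' j \<le> real (a j)" "real (a j) < real N * x' j + 1" by linarith+
    have "real N * x' j \<le> real N * 1" using x'[OF that] N by (intro mult_left_mono) auto
    then have "real N * x' j \<le> real N" by simp
    then show "a j \<le> N" unfolding a_def by simp
  qed
  have aN: "a j = N" if "j \<notin> u" for j by (simp add: a_def x'_def that)
  have iff: "frac (real k * real (v j) / real N) < x' j \<longleftrightarrow> (k * v j) mod N < a j" if "j \<in> I" for j k
  proof -
    have pos: "0 < real N * x' j" using x'[OF that] N by simp
    have "frac (real k * real (v j) / real N) = real ((k * v j) mod N) / real N"
      using frac_nat_div[OF N, of "k * v j"] by simp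
    then have "frac (real k * real (v j) / real N) < x' j \<longleftrightarrow> real ((k * v j) mod N) < real N * x' j"
      using N by (simp add: divide_less_eq mult.commute)
    also have "\<dots> \<longleftrightarrow> int ((k * v j) mod N) < \<lceil>real N * x' j\<rceil>" by (simp add: less_ceiling_iff)
    also have "\<dots> \<longleftrightarrow> (k * v j) mod N < a j" unfolding a_def using pos by linarith
    finally show ?thesis .
  qed
  define cnt where "cnt = card {k \<in> {0..<N}. \<forall>j\<in>I. (k * v j) mod N < a j}"
  have cnt_eq: "card {k \<in> {0..<N}. \<forall>j\<in>{1..s}. frac (real k * real (v j) / real N) < x' j} = cnt"
    unfolding cnt_def using iff by (simp add: I_def)
  define y where "y j = real (a j) / real N" for j
  have disc_eq: "discr N s v x' = real cnt / real N - (\<Prod>j\<in>I. x' j)"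
    unfolding discr_def cnt_eq I_def by simp
  define P where "P = PiE I (\<lambda>_. CN N)"
  have P: "finite P" unfolding P_def using I by (simp add: finite_PiE)
  define H0 where "H0 = restrict (\<lambda>_. 0::int) I"
  have H0P: "H0 \<in> P" unfolding P_def H0_def using zero_CN[OF N] by auto
  define T where "T H = (dual N I v H :: complex) * (\<Prod>j\<in>I. coef N (a j) (H j))" for H
  have cf: "of_nat cnt / of_nat N = (\<Sum>H\<in>P. T H)"
    unfolding cnt_def P_def T_def by (rule count_formula[OF N I]) (use a1 in auto)
  have TH0: "T H0 = of_real (\<Prod>j\<in>I. y j)"
    unfolding T_def H0_def dual_def y_def using I by (simp add: coef_0)
  have split: "(\<Sum>H\<in>P. T H) = T H0 + (\<Sum>H\<in>P - {H0}. T H)"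
    using P H0P by (simp add: sum.remove)
  have c1: "of_real (real cnt / real N - (\<Prod>j\<in>I. y j)) = (\<Sum>H\<in>P - {H0}. T H)"
    using cf split TH0 by simp
  define q where "q j = (if j \<in> u then \<gamma> j else 1)" for j
  have pw: "prod_weight \<gamma> u = (\<Prod>j\<in>I. q j)"
  proof -
    have "(\<Prod>j\<in>I. q j) = (\<Prod>j\<in>u. q j)"
      using u I by (intro prod.mono_neutral_right) (auto simp: q_def I_def)
    also have "\<dots> = (\<Prod>j\<in>u. \<gamma> j)" by (simp add: q_def)
    finally show ?thesis by (simp add: prod_weight_def)
  qed
  have q: "0 < q j \<and> q j \<le> 1" if "j \<in> I" for j using \<gamma>[of j] that by (auto simp: q_def I_def)
  have perj: "0 \<le> q j * norm (coef N (a j) h) \<and> q j * norm (coef N (a j) h) \<le> rho \<gamma> j h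
       \<and> (h \<noteq> 0 \<longrightarrow> q j * norm (coef N (a j) h) \<le> rho \<gamma> j h / 2)"
    if j: "j \<in> I" and h: "h \<in> CN N" for j h
  proof (cases "h = 0")
    case True
    have "norm (coef N (a j) h) \<le> 1" using True coef_norm_0[OF N a1(3)[OF j]] by simp
    then have "q j * norm (coef N (a j) h) \<le> 1 * 1" using q[OF j] by (intro mult_mono) auto
    then show ?thesis using True q[OF j] \<gamma>[of j] j by (auto simp: rho_def I_def)
  next
    case False
    have "q j * norm (coef N (a j) h) \<le> rho \<gamma> j h / 2"
    proof (cases "j \<in> u")
      case True
      have "norm (coef N (a j) h) \<le> 1 / (2 * \<bar>of_int h\<bar>)"
        using coef_bound[OF N h False, of "a j"] by (simp add: coef_def)
      then have "\<gamma> j * norm (coef N (a j) h) \<le> \<gamma> j * (1 / (2 * \<bar>of_int h\<bar>))"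
        using \<gamma>[of j] j by (intro mult_left_mono) (auto simp: I_def)
      then show ?thesis using True False by (simp add: q_def rho_def)
    next
      case nu: False
      then have "coef N (a j) h = 0" using aN[OF nu] coef_N[OF N h False] by simp
      then show ?thesis using False \<gamma>[of j] j by (simp add: rho_def I_def)
    qed
    moreover have "0 \<le> rho \<gamma> j h" using \<gamma>[of j] j by (intro rho_nonneg) (auto simp: I_def)
    ultimately show ?thesis using False q[OF j] by auto
  qed
  have Hbound: "prod_weight \<gamma> u * norm (T H) \<le> dual N I v H * ((\<Prod>j\<in>I. rho \<gamma> j (H j)) / 2)"
    if H: "H \<in> P - {H0}" for H
  proof -
    obtain j0 where j0: "j0 \<in> I" "H j0 \<noteq> 0"
    proof (rule ccontr)
      assume "\<not> thesis"
      then have "\<forall>j\<in>I. H j = 0" using that by blast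
      then have "H = H0" using H unfolding P_def H0_def by (auto simp: PiE_def extensional_def)
      then show False using H by simp
    qed
    have HC: "H j \<in> CN N" if "j \<in> I" for j using H that unfolding P_def by auto
    have "prod_weight \<gamma> u * (\<Prod>j\<in>I. norm (coef N (a j) (H j))) = (\<Prod>j\<in>I. q j * norm (coef N (a j) (H j)))"
      unfolding pw by (simp add: prod.distrib)
    also have "\<dots> \<le> (\<Prod>j\<in>I. rho \<gamma> j (H j)) / 2"
      by (rule prod_half[OF I _ j0(1)]) (use perj HC j0 in auto)
    finally have "prod_weight \<gamma> u * (\<Prod>j\<in>I. norm (coef N (a j) (H j))) \<le> (\<Prod>j\<in>I. rho \<gamma> j (H j)) / 2" .
    moreover have "norm (T H) = dual N I v H * (\<Prod>j\<in>I. norm (coef N (a j) (H j)))"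
      unfolding T_def by (simp add: dual_def prod_norm norm_mult)
    moreover have "0 \<le> prod_weight \<gamma> u" unfolding pw using q by (intro prod_nonneg) (auto intro: less_imp_le)
    ultimately show ?thesis using dual_nonneg[of N I v H] dual_le1[of N I v H]
      by (simp add: dual_def)
  qed
  have pwnn: "0 \<le> prod_weight \<gamma> u" unfolding pw using q by (intro prod_nonneg) (auto intro: less_imp_le)
  have E1: "prod_weight \<gamma> u * \<bar>real cnt / real N - (\<Prod>j\<in>I. y j)\<bar> \<le> 1/2 * (Gsum N {1..s} v \<gamma> - (\<Prod>j\<in>{1..s}. 1 + \<gamma> j))"
  proof -
    have "\<bar>real cnt / real N - (\<Prod>j\<in>I. y j)\<bar> = norm (\<Sum>H\<in>P - {H0}. T H)"
      using c1 by (metis norm_of_real)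
    also have "\<dots> \<le> (\<Sum>H\<in>P - {H0}. norm (T H))" by (rule norm_sum)
    finally have "prod_weight \<gamma> u * \<bar>real cnt / real N - (\<Prod>j\<in>I. y j)\<bar> \<le> (\<Sum>H\<in>P - {H0}. prod_weight \<gamma> u * norm (T H))"
      using pwnn by (simp add: sum_distrib_left[symmetric] mult_left_mono)
    also have "\<dots> \<le> (\<Sum>H\<in>P - {H0}. dual N I v H * ((\<Prod>j\<in>I. rho \<gamma> j (H j)) / 2))"
      by (rule sum_mono) (rule Hbound)
    also have "\<dots> = 1/2 * (\<Sum>H\<in>P - {H0}. dual N I v H * (\<Prod>j\<in>I. rho \<gamma> j (H j)))"
      by (simp add: sum_distrib_left)
    also have "(\<Sum>H\<in>P - {H0}. dual N I v H * (\<Prod>j\<in>I. rho \<gamma> j (H j))) = Gsum N {1..s} v \<gamma> - (\<Prod>j\<in>{1..s}. 1 + \<gamma> j)"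
    proof -
      have "Gsum N {1..s} v \<gamma> = dual N I v H0 * (\<Prod>j\<in>I. rho \<gamma> j (H0 j)) + (\<Sum>H\<in>P - {H0}. dual N I v H * (\<Prod>j\<in>I. rho \<gamma> j (H j)))"
        unfolding Gsum_def I_def[symmetric] P_def[symmetric] using P H0P by (simp add: sum.remove)
      moreover have "dual N I v H0 * (\<Prod>j\<in>I. rho \<gamma> j (H0 j)) = (\<Prod>j\<in>{1..s}. 1 + \<gamma> j)"
        unfolding H0_def dual_def I_def by (simp add: rho_def)
      ultimately show ?thesis by simp
    qed
    finally show ?thesis .
  qed
  have box: "(\<Prod>j\<in>I. y j) - (\<Prod>j\<in>I. x' j) \<le> 1 - (1 - 1 / real N) ^ card u"
  proof -
    have yx: "0 \<le> x' j \<and> x' j \<le> y j \<and> y j \<le> 1" if "j \<in> I" for j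
    proof -
      have "real N * x' j \<le> real (a j)" "real (a j) \<le> real N" using a1[OF that] by auto
      then show ?thesis using x'[OF that] N by (auto simp: y_def field_simps)
    qed
    have "(\<Prod>j\<in>I. y j) - (\<Prod>j\<in>I. x' j) \<le> 1 - (\<Prod>j\<in>I. 1 - (y j - x' j))"
      by (rule box_lemma[OF I yx])
    also have "(1 - 1 / real N) ^ card u \<le> (\<Prod>j\<in>I. 1 - (y j - x' j))"
    proof -
      have "(\<Prod>j\<in>I. 1 - (y j - x' j)) = (\<Prod>j\<in>u. 1 - (y j - x' j))"
        using u I aN N by (intro prod.mono_neutral_right) (auto simp: I_def y_def x'_def)
      moreover have "(\<Prod>j\<in>u. (1 - 1 / real N)) \<le> (\<Prod>j\<in>u. 1 - (y j - x' j))"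
      proof (rule prod_mono)
        fix j assume "j \<in> u"
        then have j: "j \<in> I" using u I_def by auto
        have "real (a j) < real N * x' j + 1" using a1[OF j] by simp
        moreover have "y j - x' j = (real (a j) - real N * x' j) / real N" using N by (simp add: y_def field_simps)
        ultimately have "y j - x' j \<le> 1 / real N" using N by (simp add: divide_right_mono)
        moreover have "1 / real N \<le> 1" using N by simp
        ultimately show "0 \<le> 1 - 1 / real N \<and> 1 - 1 / real N \<le> 1 - (y j - x' j)" by auto
      qed
      ultimately show ?thesis by simp
    qed
    then have "1 - (\<Prod>j\<in>I. 1 - (y j - x' j)) \<le> 1 - (1 - 1 / real N) ^ card u" by simp
    finally show ?thesis .
  qed
  have yge: "(\<Prod>j\<in>I. x' j) \<le> (\<Prod>j\<in>I. y j)"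
  proof (rule prod_mono)
    fix j assume j: "j \<in> I"
    have "real N * x' j \<le> real (a j)" using a1[OF j] by auto
    then show "0 \<le> x' j \<and> x' j \<le> y j" using x'[OF j] N by (auto simp: y_def field_simps)
  qed
  have "\<bar>discr N s v x'\<bar> \<le> \<bar>real cnt / real N - (\<Prod>j\<in>I. y j)\<bar> + (1 - (1 - 1 / real N) ^ card u)"
    using box yge unfolding disc_eq by linarith
  then have "prod_weight \<gamma> u * \<bar>discr N s v x'\<bar> \<le> prod_weight \<gamma> u * \<bar>real cnt / real N - (\<Prod>j\<in>I. y j)\<bar> + prod_weight \<gamma> u * (1 - (1 - 1 / real N) ^ card u)"
    using pwnn by (metis distrib_left mult_left_mono)
  then show ?thesis using E1 unfolding x'_def by linarith
qed

lemma sum_single: "sum f {x} = f x" by simp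

definition W :: "nat \<Rightarrow> nat \<Rightarrow> nat \<Rightarrow> int \<Rightarrow> real" where
  "W b m w D = (if m \<le> w then 1 else
      (if int (b ^ (m - w)) dvd D then real (b ^ (m - w)) else 0)
    - (if int (b ^ (m - w - 1)) dvd D then real (b ^ (m - w - 1)) else 0))"

lemma Zset_alt:
  assumes b: "prime b" and w: "w < m"
  shows "Zset b m w = {z \<in> {..<b ^ (m - w)}. \<not> b dvd z}"
proof -
  have b1: "b > 1" using b prime_gt_1_nat by blast
  have "z \<in> {1..b ^ (m - w) - 1} \<and> coprime z (b ^ m) \<longleftrightarrow> z < b ^ (m - w) \<and> \<not> b dvd z" for z
  proof
    assume A: "z \<in> {1..b ^ (m - w) - 1} \<and> coprime z (b ^ m)"
    have "\<not> b dvd z"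
    proof
      assume "b dvd z"
      moreover have "b dvd b ^ m" using w by (simp add: dvd_power)
      ultimately have "is_unit b" using A coprime_common_divisor by blast
      then show False using b1 by simp
    qed
    moreover have "z < b ^ (m - w)" using A b1 by auto
    ultimately show "z < b ^ (m - w) \<and> \<not> b dvd z" by simp
  next
    assume A: "z < b ^ (m - w) \<and> \<not> b dvd z"
    then have "z \<noteq> 0" by (metis dvd_0_right)
    moreover have "coprime z (b ^ m)" using A b prime_imp_power_coprime by blast
    ultimately show "z \<in> {1..b ^ (m - w) - 1} \<and> coprime z (b ^ m)" using A by auto
  qed
  then show ?thesis unfolding Zset_def using w by auto
qed

lemma Zsum:
  fixes D :: int
  assumes b: "prime b"
  shows "(\<Sum>z\<in>Zset b m w. ee (of_int D * real (b ^ w * z) / real (b ^ m))) = of_real (W b m w D)"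
proof (cases "m \<le> w")
  case True
  have "of_int D * real (b ^ w * 1) / real (b ^ m) = of_int (D * int (b ^ (w - m)))"
  proof -
    have "b ^ w = b ^ m * b ^ (w - m)" using True by (simp add: power_add[symmetric])
    then show ?thesis using b by (simp add: prime_gt_0_nat)
  qed
  then have e1: "ee (of_int D * real (b ^ w * 1) / real (b ^ m)) = 1" by (simp only: ee_int)
  define g where "g z = ee (of_int D * real (b ^ w * z) / real (b ^ m))" for z
  have g1: "g 1 = 1" unfolding g_def by (rule e1)
  have Z1: "Zset b m w = {1}" using True by (simp add: Zset_def)
  have W1: "W b m w D = 1" using True by (simp add: W_def)
  have "sum g (Zset b m w) = 1" unfolding Z1 sum_single by (rule g1)
  then show ?thesis unfolding W1 of_real_1 g_def[abs_def] .
next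
  case False
  then have w: "w < m" by simp
  have b1: "b > 1" using b prime_gt_1_nat by blast
  define n where "n = b ^ (m - w)"
  define n' where "n' = b ^ (m - w - 1)"
  have mw: "m - w = Suc (m - w - 1)" using w by simp
  have nn: "n = b * n'" unfolding n_def n'_def by (subst mw) (simp only: power_Suc)
  have n'pos: "n' > 0" unfolding n'_def using b1 by simp
  have npos: "n > 0" using nn n'pos b1 by simp
  have arg: "of_int D * real (b ^ w * z) / real (b ^ m) = real z * of_int D / real n" for z
  proof -
    have "b ^ m = b ^ w * n" unfolding n_def using w by (simp add: power_add[symmetric])
    then show ?thesis using b1 by (simp add: field_simps)
  qed
  have Z: "Zset b m w = {..<n} - {z \<in> {..<n}. b dvd z}"
    using Zset_alt[OF b w] unfolding n_def by auto
  have img: "{z \<in> {..<n}. b dvd z} = (\<lambda>z'. b * z') ` {..<n'}"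
  proof (rule set_eqI, rule iffI)
    fix z assume "z \<in> {z \<in> {..<n}. b dvd z}"
    then obtain z' where "z = b * z'" "b * z' < b * n'" using nn by auto
    then show "z \<in> (\<lambda>z'. b * z') ` {..<n'}" by auto
  next
    fix z assume "z \<in> (\<lambda>z'. b * z') ` {..<n'}"
    then show "z \<in> {z \<in> {..<n}. b dvd z}" using nn b1 by auto
  qed
  have inj: "inj_on (\<lambda>z'. b * z') {..<n'}" using b1 by (auto simp: inj_on_def)
  have arg2: "real (b * z') * of_int D / real n = real z' * of_int D / real n'" for z'
    using b1 n'pos by (simp add: nn field_simps)
  have Wf: "W b m w D = (if int n dvd D then real n else 0) - (if int n' dvd D then real n' else 0)"
    using w by (simp add: W_def n_def n'_def)
  have "(\<Sum>z\<in>Zset b m w. ee (of_int D * real (b ^ w * z) / real (b ^ m)))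
      = (\<Sum>z\<in>Zset b m w. ee (real z * of_int D / real n))" by (simp only: arg)
  also have "\<dots> = (\<Sum>z<n. ee (real z * of_int D / real n)) - (\<Sum>z\<in>{z \<in> {..<n}. b dvd z}. ee (real z * of_int D / real n))"
    unfolding Z by (rule sum_diff) auto
  also have "(\<Sum>z\<in>{z \<in> {..<n}. b dvd z}. ee (real z * of_int D / real n)) = (\<Sum>z'<n'. ee (real (b * z') * of_int D / real n))"
    by (simp only: img sum.reindex[OF inj] comp_def)
  also have "\<dots> = (\<Sum>z'<n'. ee (real z' * of_int D / real n'))"
    by (simp only: arg2)
  also have "(\<Sum>z<n. ee (real z * of_int D / real n)) - (\<Sum>z'<n'. ee (real z' * of_int D / real n'))
     = (if int n dvd D then of_nat n else 0) - (if int n' dvd D then of_nat n' else 0)"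
    by (simp only: root_sum[OF npos] root_sum[OF n'pos])
  also have "\<dots> = of_real (W b m w D)" unfolding Wf by simp
  finally show ?thesis .
qed

lemma card_Zset:
  assumes b: "prime b"
  shows "real (card (Zset b m w)) = W b m w 0"
proof -
  have "of_real (real (card (Zset b m w))) = (of_real (W b m w 0) :: complex)"
    using Zsum[OF b, where m=m and w=w and D=0] by simp
  then show ?thesis using of_real_eq_iff by blast
qed

definition U :: "nat \<Rightarrow> nat \<Rightarrow> (nat \<Rightarrow> real) \<Rightarrow> nat \<Rightarrow> nat \<Rightarrow> nat \<Rightarrow> real" where
  "U b m \<gamma> j wj k = (\<Sum>h\<in>CN (b ^ m). rho \<gamma> j h * W b m wj (h * int k))"

lemma Gsum_complex:
  assumes N: "N > 0" and I: "finite I"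
  shows "of_real (Gsum N I v \<gamma>) = 1 / of_nat N * (\<Sum>k<N. \<Prod>j\<in>I. \<Sum>h\<in>CN N. of_real (rho \<gamma> j h) * ee (of_int h * real k * real (v j) / real N))"
proof -
  have "of_real (Gsum N I v \<gamma>) = (\<Sum>H\<in>PiE I (\<lambda>_. CN N). dual N I v H * (\<Prod>j\<in>I. (of_real (rho \<gamma> j (H j)) :: complex)))"
    unfolding Gsum_def by (simp add: dual_complex of_real_prod)
  also have "\<dots> = 1 / of_nat N * (\<Sum>k<N. \<Prod>j\<in>I. \<Sum>h\<in>CN N. of_real (rho \<gamma> j h) * ee (of_int h * real k * real (v j) / real N))"
    by (rule exchange[OF N I])
  finally show ?thesis .
qed

lemma Zsum_rho:
  assumes b: "prime b"
  shows "(\<Sum>z\<in>Zset b m wj. \<Sum>h\<in>CN (b ^ m). of_real (rho \<gamma> j h) * ee (of_int h * real k * real (b ^ wj * z) / real (b ^ m)))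
    = (of_real (U b m \<gamma> j wj k) :: complex)"
proof -
  have "(\<Sum>z\<in>Zset b m wj. \<Sum>h\<in>CN (b ^ m). of_real (rho \<gamma> j h) * ee (of_int h * real k * real (b ^ wj * z) / real (b ^ m)))
      = (\<Sum>h\<in>CN (b ^ m). of_real (rho \<gamma> j h) * (\<Sum>z\<in>Zset b m wj. ee (of_int (h * int k) * real (b ^ wj * z) / real (b ^ m))))"
    by (subst sum.swap) (simp add: sum_distrib_left)
  also have "\<dots> = (\<Sum>h\<in>CN (b ^ m). of_real (rho \<gamma> j h) * of_real (W b m wj (h * int k)))"
    by (simp only: Zsum[OF b])
  also have "\<dots> = of_real (U b m \<gamma> j wj k)"
    unfolding U_def by (simp add: of_real_sum)
  finally show ?thesis .
qed

lemma avg_formula: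
  assumes b: "prime b" and I: "finite I"
  shows "(\<Sum>zz\<in>PiE I (\<lambda>j. Zset b m (w j)). Gsum (b ^ m) I (\<lambda>j. b ^ w j * zz j) \<gamma>)
     = 1 / real (b ^ m) * (\<Sum>k<b ^ m. \<Prod>j\<in>I. U b m \<gamma> j (w j) k)"
proof -
  define N where "N = b ^ m"
  have N: "N > 0" unfolding N_def using b prime_gt_0_nat by simp
  define F where "F j k z = (\<Sum>h\<in>CN N. of_real (rho \<gamma> j h) * ee (of_int h * real k * real (b ^ w j * z) / real N))" for j k z
  have "of_real (\<Sum>zz\<in>PiE I (\<lambda>j. Zset b m (w j)). Gsum N I (\<lambda>j. b ^ w j * zz j) \<gamma>)
      = (\<Sum>zz\<in>PiE I (\<lambda>j. Zset b m (w j)). 1 / of_nat N * (\<Sum>k<N. \<Prod>j\<in>I. F j k (zz j)))"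
    unfolding of_real_sum F_def by (rule sum.cong[OF refl], rule Gsum_complex[OF N I])
  also have "\<dots> = 1 / of_nat N * (\<Sum>k<N. \<Sum>zz\<in>PiE I (\<lambda>j. Zset b m (w j)). \<Prod>j\<in>I. F j k (zz j))"
    by (simp only: sum_distrib_left[symmetric]) (subst sum.swap, rule refl)
  also have "\<dots> = 1 / of_nat N * (\<Sum>k<N. \<Prod>j\<in>I. \<Sum>z\<in>Zset b m (w j). F j k z)"
  proof -
    have "(\<Sum>zz\<in>PiE I (\<lambda>j. Zset b m (w j)). \<Prod>j\<in>I. F j k (zz j)) = (\<Prod>j\<in>I. \<Sum>z\<in>Zset b m (w j). F j k z)" for k
      by (rule prod_sum_PiE[symmetric]) (use I in \<open>auto simp: Zset_def\<close>)
    then show ?thesis by simp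
  qed
  also have "\<dots> = 1 / of_nat N * (\<Sum>k<N. \<Prod>j\<in>I. of_real (U b m \<gamma> j (w j) k))"
    unfolding F_def N_def by (simp only: Zsum_rho[OF b])
  also have "\<dots> = of_real (1 / real N * (\<Sum>k<N. \<Prod>j\<in>I. U b m \<gamma> j (w j) k))"
    by (simp add: of_real_sum of_real_prod)
  finally show ?thesis unfolding N_def using of_real_eq_iff by blast
qed

lemma exists_le_avg:
  fixes f :: "'a \<Rightarrow> real"
  assumes "finite S" "S \<noteq> {}"
  shows "\<exists>x\<in>S. f x \<le> (\<Sum>x\<in>S. f x) / real (card S)"
proof (rule ccontr)
  assume "\<not> ?thesis"
  then have "\<forall>x\<in>S. (\<Sum>x\<in>S. f x) / real (card S) < f x" by auto
  then have "(\<Sum>x\<in>S. (\<Sum>x\<in>S. f x) / real (card S)) < (\<Sum>x\<in>S. f x)"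
    using assms by (intro sum_strict_mono) auto
  then show False using assms by simp
qed

definition Tsum :: "nat \<Rightarrow> int \<Rightarrow> real" where
  "Tsum N d = (\<Sum>h\<in>{h \<in> CN N - {0}. d dvd h}. 1 / real_of_int \<bar>h\<bar>)"

lemma CN_scale:
  assumes d: "d > 0"
  shows "int d * g \<in> CN (d * n) \<longleftrightarrow> g \<in> CN n"
proof -
  have dp: "int d > 0" using d by simp
  have "- int (d * n) < 2 * (int d * g) \<longleftrightarrow> int d * (- int n) < int d * (2 * g)"
    by (simp add: algebra_simps)
  also have "\<dots> \<longleftrightarrow> - int n < 2 * g" by (rule mult_less_cancel_left_pos[OF dp])
  finally have 1: "- int (d * n) < 2 * (int d * g) \<longleftrightarrow> - int n < 2 * g" .
  have "2 * (int d * g) \<le> int (d * n) \<longleftrightarrow> int d * (2 * g) \<le> int d * int n"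
    by (simp add: algebra_simps)
  also have "\<dots> \<longleftrightarrow> 2 * g \<le> int n" by (rule mult_le_cancel_left_pos[OF dp])
  finally have 2: "2 * (int d * g) \<le> int (d * n) \<longleftrightarrow> 2 * g \<le> int n" .
  from 1 2
  show ?thesis by (simp add: CN_iff)
qed

lemma Tsum_scale:
  assumes d: "d > 0"
  shows "Tsum (d * n) (int d) = S_N n / real d"
proof -
  have img: "{h \<in> CN (d * n) - {0}. int d dvd h} = (\<lambda>g. int d * g) ` (CN n - {0})"
  proof (rule set_eqI, rule iffI)
    fix h assume "h \<in> {h \<in> CN (d * n) - {0}. int d dvd h}"
    then obtain g where g: "h = int d * g" "int d * g \<in> CN (d * n)" "int d * g \<noteq> 0" by auto
    then have "g \<in> CN n - {0}" using CN_scale[OF d] by auto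
    then show "h \<in> (\<lambda>g. int d * g) ` (CN n - {0})" using g by auto
  next
    fix h assume "h \<in> (\<lambda>g. int d * g) ` (CN n - {0})"
    then obtain g where g: "h = int d * g" "g \<in> CN n" "g \<noteq> 0" by auto
    then show "h \<in> {h \<in> CN (d * n) - {0}. int d dvd h}" using CN_scale[OF d] d by auto
  qed
  have inj: "inj_on (\<lambda>g. int d * g) (CN n - {0})" using d by (auto simp: inj_on_def)
  have "Tsum (d * n) (int d) = (\<Sum>g\<in>CN n - {0}. 1 / real_of_int \<bar>int d * g\<bar>)"
    unfolding Tsum_def img by (simp add: sum.reindex[OF inj])
  also have "\<dots> = (\<Sum>g\<in>CN n - {0}. (1 / real d) * (1 / real_of_int \<bar>g\<bar>))"
    by (rule sum.cong) (auto simp: abs_mult)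
  also have "\<dots> = S_N n / real d" unfolding S_N_CN sum_divide_distrib by (rule sum.cong) auto
  finally show ?thesis .
qed

lemma CN_mono: "b \<ge> 1 \<Longrightarrow> CN n \<subseteq> CN (b * n)"
proof
  fix h assume b: "b \<ge> 1" and "h \<in> CN n"
  then have h: "- int n < 2 * h" "2 * h \<le> int n" by (auto simp: CN_iff)
  have "1 * n \<le> b * n" by (rule mult_le_mono1) (use b in simp)
  then have bn: "int n \<le> int (b * n)" by (simp only: mult_1 of_nat_le_iff)
  show "h \<in> CN (b * n)" unfolding CN_iff using h bn by linarith
qed

lemma S_N_mono:
  assumes b: "b \<ge> 1"
  shows "S_N n \<le> S_N (b * n)"
  unfolding S_N_CN using CN_mono[OF b]
  by (intro sum_mono2) auto

lemma S_N_diff: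
  assumes b: "b \<ge> 1" and n: "n \<ge> 1"
  shows "S_N (b * n) - S_N n \<le> 2 * (real b - 1)"
proof -
  have sub: "CN n - {0} \<subseteq> CN (b * n) - {0}" using CN_mono[OF b] by auto
  have "S_N (b * n) - S_N n = (\<Sum>h\<in>(CN (b * n) - {0}) - (CN n - {0}). 1 / real_of_int \<bar>h\<bar>)"
    unfolding S_N_CN by (subst sum_diff[OF _ sub]) auto
  also have "(CN (b * n) - {0}) - (CN n - {0}) = CN (b * n) - CN n" using zero_CN[of n] n by auto
  also have "(\<Sum>h\<in>CN (b * n) - CN n. 1 / real_of_int \<bar>h\<bar>) \<le> (\<Sum>h\<in>CN (b * n) - CN n. 2 / real n)"
  proof (rule sum_mono)
    fix h assume "h \<in> CN (b * n) - CN n"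
    then have "\<not> (- int n < 2 * h \<and> 2 * h \<le> int n)" by (auto simp: CN_iff)
    then have "int n \<le> 2 * \<bar>h\<bar>" by auto
    then have "real n \<le> 2 * real_of_int \<bar>h\<bar>" by linarith
    moreover have "real n > 0" using n by simp
    ultimately show "1 / real_of_int \<bar>h\<bar> \<le> 2 / real n" by (simp add: field_simps)
  qed
  also have "\<dots> = real (card (CN (b * n) - CN n)) * (2 / real n)" by simp
  also have "card (CN (b * n) - CN n) = b * n - n"
    using card_Diff_subset[OF finite_CN CN_mono[OF b]] card_CN n b by simp
  also have "real (b * n - n) * (2 / real n) = 2 * (real b - 1)"
    using n b by (simp add: of_nat_diff field_simps)
  finally show ?thesis .
qed

lemma Tsum_pow:
  assumes b: "b > 0" and i: "i \<le> m"
  shows "Tsum (b ^ m) (int (b ^ i)) = S_N (b ^ (m - i)) / real (b ^ i)"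
proof -
  have "b ^ m = b ^ i * b ^ (m - i)" using i by (simp add: power_add[symmetric])
  then show ?thesis using Tsum_scale[of "b ^ i" "b ^ (m - i)"] b by simp
qed

lemma sum_filter_rho:
  "(\<Sum>h\<in>CN N - {0}. rho \<gamma> j h * (if d dvd h then c else 0)) = \<gamma> j * c * Tsum N d"
proof -
  have "(\<Sum>h\<in>CN N - {0}. rho \<gamma> j h * (if d dvd h then c else 0)) = (\<Sum>h\<in>CN N - {0}. if d dvd h then \<gamma> j * c * (1 / real_of_int \<bar>h\<bar>) else 0)"
    by (rule sum.cong) (auto simp: rho_def)
  also have "\<dots> = (\<Sum>h\<in>{h \<in> CN N - {0}. d dvd h}. \<gamma> j * c * (1 / real_of_int \<bar>h\<bar>))"
    by (rule sum.inter_filter[symmetric]) simp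
  also have "\<dots> = \<gamma> j * c * Tsum N d" by (simp add: Tsum_def sum_distrib_left)
  finally show ?thesis .
qed

lemma rho_sum:
  assumes N: "N > 0"
  shows "(\<Sum>h\<in>CN N. rho \<gamma> j h) = 1 + \<gamma> j + \<gamma> j * S_N N"
proof -
  have "(\<Sum>h\<in>CN N. rho \<gamma> j h) = rho \<gamma> j 0 + (\<Sum>h\<in>CN N - {0}. rho \<gamma> j h)"
    using zero_CN[OF N] by (simp add: sum.remove)
  also have "(\<Sum>h\<in>CN N - {0}. rho \<gamma> j h) = (\<Sum>h\<in>CN N - {0}. \<gamma> j * (1 / real_of_int \<bar>h\<bar>))"
    by (rule sum.cong) (auto simp: rho_def)
  also have "\<dots> = \<gamma> j * S_N N" by (simp add: S_N_CN sum_distrib_left)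
  finally show ?thesis by (simp add: rho_def)
qed

lemma W0_pos:
  assumes b: "prime b"
  shows "W b m w 0 > 0"
proof -
  have b1: "b > 1" using b prime_gt_1_nat by blast
  show ?thesis
  proof (cases "m \<le> w")
    case True then show ?thesis by (simp add: W_def)
  next
    case False
    have mw: "m - w = Suc (m - w - 1)" using False by simp
    have "b ^ (m - w) = b * b ^ (m - w - 1)" by (subst mw) (simp only: power_Suc)
    moreover have "b ^ (m - w - 1) > 0" using b1 by simp
    ultimately have "b ^ (m - w - 1) < b ^ (m - w)" using b1 by simp
    then have "real (b ^ (m - w - 1)) < real (b ^ (m - w))" by (simp only: of_nat_less_iff)
    then show ?thesis using False by (simp add: W_def)
  qed
qed

lemma U_full:
  assumes b: "prime b" and k: "m \<le> w \<or> int (b ^ (m - w)) dvd int k"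
  shows "U b m \<gamma> j w k = W b m w 0 * (1 + \<gamma> j + \<gamma> j * S_N (b ^ m))"
proof -
  have N: "b ^ m > 0" using b prime_gt_0_nat by simp
  have "W b m w (h * int k) = W b m w 0" for h
  proof (cases "m \<le> w")
    case True then show ?thesis by (simp add: W_def)
  next
    case False
    then have d1: "int (b ^ (m - w)) dvd h * int k" using k by auto
    have "b ^ (m - w - 1) dvd b ^ (m - w)" by (rule le_imp_power_dvd) simp
    then have "int (b ^ (m - w - 1)) dvd int (b ^ (m - w))" by (simp only: of_nat_dvd_iff)
    then have d2: "int (b ^ (m - w - 1)) dvd h * int k" using d1 dvd_trans by blast
    show ?thesis using d1 d2 False by (simp add: W_def)
  qed
  then have "U b m \<gamma> j w k = (\<Sum>h\<in>CN (b ^ m). rho \<gamma> j h * W b m w 0)" unfolding U_def by simp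
  also have "\<dots> = W b m w 0 * (1 + \<gamma> j + \<gamma> j * S_N (b ^ m))"
    by (simp add: sum_distrib_right[symmetric] rho_sum[OF N] mult.commute)
  finally show ?thesis .
qed

lemma dvd_shift:
  fixes h :: int
  assumes b: "prime b" and k': "\<not> b dvd k'" and pi: "p \<le> i"
  shows "int (b ^ i) dvd h * int (b ^ p * k') \<longleftrightarrow> int (b ^ (i - p)) dvd h"
proof -
  have cop: "coprime (int (b ^ i)) (int k')" using prime_imp_power_coprime[OF b k', of i]
    by (simp add: coprime_commute)
  have "int (b ^ i) dvd h * int (b ^ p * k') \<longleftrightarrow> int (b ^ i) dvd (h * int (b ^ p)) * int k'"
    by (simp add: algebra_simps)
  also have "\<dots> \<longleftrightarrow> int (b ^ i) dvd h * int (b ^ p)" by (rule coprime_dvd_mult_left_iff[OF cop])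
  also have "\<dots> \<longleftrightarrow> int (b ^ (i - p)) dvd h"
  proof -
    have eq: "int (b ^ i) = int (b ^ (i - p)) * int (b ^ p)"
      using pi by (simp add: power_add[symmetric])
    show ?thesis unfolding eq using b by (intro dvd_times_right_cancel_iff) (simp add: prime_gt_0_nat)
  qed
  finally show ?thesis .
qed


lemma U_partial:
  assumes b: "prime b" and w: "w < m" and k: "k \<ge> 1"
    and nd: "\<not> int (b ^ (m - w)) dvd int k"
    and \<gamma>: "0 < \<gamma> j" "\<gamma> j \<le> 1"
  shows "0 \<le> U b m \<gamma> j w k \<and> U b m \<gamma> j w k \<le> W b m w 0 * (1 + \<gamma> j)"
proof -
  have b1: "b > 1" using b prime_gt_1_nat by blast
  have b0: "b > 0" using b1 by simp
  have N: "b ^ m > 0" using b0 by simp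
  define p where "p = multiplicity b k"
  have knz: "k \<noteq> 0" using k by simp
  have nu: "\<not> is_unit b" using b1 by simp
  obtain k' where kk: "k = b ^ p * k'" "\<not> b dvd k'"
    using multiplicity_decompose'[OF knz nu] unfolding p_def by blast
  have pm: "p < m - w"
  proof (rule ccontr)
    assume "\<not> p < m - w"
    then have "b ^ (m - w) dvd b ^ p" by (intro le_imp_power_dvd) simp
    then have "b ^ (m - w) dvd k" using kk(1) by (simp add: dvd_mult2)
    then have "int (b ^ (m - w)) dvd int k" by (simp only: of_nat_dvd_iff)
    then show False using nd by simp
  qed
  define M where "M = m - w - p"
  have M1: "M \<ge> 1" "M \<le> m" unfolding M_def using pm by auto
  define X where "X = real (b ^ (m - w))"
  define Y where "Y = real (b ^ (m - w - 1))"
  define n0 where "n0 = b ^ (m - M)"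
  have Wh: "W b m w (h * int k) = (if int (b ^ M) dvd h then X else 0) - (if int (b ^ (M - 1)) dvd h then Y else 0)" for h
  proof -
    have "int (b ^ (m - w)) dvd h * int k \<longleftrightarrow> int (b ^ M) dvd h"
      unfolding kk(1) M_def using dvd_shift[OF b kk(2), of p "m - w" h] pm by simp
    moreover have "int (b ^ (m - w - 1)) dvd h * int k \<longleftrightarrow> int (b ^ (M - 1)) dvd h"
    proof -
      have "m - w - 1 - p = M - 1" unfolding M_def by simp
      then show ?thesis unfolding kk(1) using dvd_shift[OF b kk(2), of p "m - w - 1" h] pm by simp
    qed
    ultimately show ?thesis using w by (simp add: W_def X_def Y_def)
  qed
  have W0: "W b m w 0 = X - Y" using w by (simp add: W_def X_def Y_def)
  have "U b m \<gamma> j w k = (\<Sum>h\<in>CN (b ^ m). rho \<gamma> j h * ((if int (b ^ M) dvd h then X else 0) - (if int (b ^ (M - 1)) dvd h then Y else 0)))"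
    unfolding U_def by (simp only: Wh)
  also have "\<dots> = rho \<gamma> j 0 * (X - Y) + (\<Sum>h\<in>CN (b ^ m) - {0}. rho \<gamma> j h * ((if int (b ^ M) dvd h then X else 0) - (if int (b ^ (M - 1)) dvd h then Y else 0)))"
    using zero_CN[OF N] by (simp add: sum.remove)
  also have "(\<Sum>h\<in>CN (b ^ m) - {0}. rho \<gamma> j h * ((if int (b ^ M) dvd h then X else 0) - (if int (b ^ (M - 1)) dvd h then Y else 0)))
      = \<gamma> j * X * Tsum (b ^ m) (int (b ^ M)) - \<gamma> j * Y * Tsum (b ^ m) (int (b ^ (M - 1)))"
    by (simp add: right_diff_distrib sum_subtractf sum_filter_rho)
  also have "\<gamma> j * X * Tsum (b ^ m) (int (b ^ M)) = \<gamma> j * real (b ^ p) * S_N n0"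
  proof -
    have "X = real (b ^ p) * real (b ^ M)" unfolding X_def M_def using pm by (simp add: power_add[symmetric])
    then show ?thesis using Tsum_pow[OF b0 M1(2)] b0 by (simp add: n0_def)
  qed
  also have "\<gamma> j * Y * Tsum (b ^ m) (int (b ^ (M - 1))) = \<gamma> j * real (b ^ p) * S_N (b * n0)"
  proof -
    have "Y = real (b ^ p) * real (b ^ (M - 1))" unfolding Y_def M_def using pm by (simp add: power_add[symmetric])
    moreover have "b ^ (m - (M - 1)) = b * n0"
    proof -
      have "m - (M - 1) = Suc (m - M)" using M1 by simp
      then show ?thesis unfolding n0_def by (simp only: power_Suc)
    qed
    ultimately show ?thesis using Tsum_pow[OF b0, of "M - 1" m] M1 b0 by simp
  qed
  finally have Ueq: "U b m \<gamma> j w k = (1 + \<gamma> j) * (X - Y) + \<gamma> j * real (b ^ p) * (S_N n0 - S_N (b * n0))"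
    by (simp add: rho_def algebra_simps)
  have n0: "n0 \<ge> 1" unfolding n0_def using b0 by simp
  have s1: "S_N n0 \<le> S_N (b * n0)" using S_N_mono b1 by simp
  have s2: "S_N (b * n0) - S_N n0 \<le> 2 * (real b - 1)" using S_N_diff b1 n0 by simp
  have XY: "real (b ^ p) * (real b - 1) \<le> X - Y"
  proof -
    have "m - w = Suc (m - w - 1)" using w by simp
    then have "X = real b * Y" unfolding X_def Y_def by (metis of_nat_mult power_Suc)
    then have "X - Y = Y * (real b - 1)" by (simp add: algebra_simps)
    moreover have "real (b ^ p) \<le> Y" unfolding Y_def using pm b1 by (simp add: power_increasing)
    ultimately show ?thesis using b1 by (simp add: mult_right_mono)
  qed
  have gp: "0 \<le> \<gamma> j * real (b ^ p)" using \<gamma> by simp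
  have up: "U b m \<gamma> j w k \<le> W b m w 0 * (1 + \<gamma> j)"
  proof -
    have "\<gamma> j * real (b ^ p) * (S_N n0 - S_N (b * n0)) \<le> 0"
      using gp s1 by (simp add: mult_nonneg_nonpos)
    then show ?thesis unfolding Ueq W0 by (simp add: algebra_simps)
  qed
  have lo: "0 \<le> U b m \<gamma> j w k"
  proof -
    have "\<gamma> j * real (b ^ p) * (S_N (b * n0) - S_N n0) \<le> \<gamma> j * real (b ^ p) * (2 * (real b - 1))"
      using s2 gp by (rule mult_left_mono)
    also have "\<dots> = 2 * \<gamma> j * (real (b ^ p) * (real b - 1))" by simp
    also have "\<dots> \<le> 2 * \<gamma> j * (X - Y)" using XY \<gamma> by (intro mult_left_mono) auto
    finally have "\<gamma> j * real (b ^ p) * (S_N (b * n0) - S_N n0) \<le> 2 * \<gamma> j * (X - Y)" .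
    moreover have "0 \<le> (1 - \<gamma> j) * (X - Y)"
    proof -
      have "0 \<le> real (b ^ p) * (real b - 1)" using b1 by simp
      then have "0 \<le> X - Y" using XY by linarith
      then show ?thesis using \<gamma> by simp
    qed
    ultimately show ?thesis unfolding Ueq by (simp add: algebra_simps)
  qed
  show ?thesis using up lo by simp
qed

lemma card_multiples:
  assumes d: "d > 0" and dn: "d dvd n"
  shows "card {k \<in> {1..<n}. d dvd k} = n div d - 1"
proof -
  have "{k \<in> {1..<n}. d dvd k} = (\<lambda>t. d * t) ` {1..<n div d}"
  proof (rule set_eqI, rule iffI)
    fix k assume "k \<in> {k \<in> {1..<n}. d dvd k}"
    then obtain t where t: "k = d * t" "1 \<le> d * t" "d * t < n" by auto
    have "t \<ge> 1" using t(2) by (cases t) auto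
    moreover have "t < n div d" using t(3) dn d
      by (metis dvd_mult_div_cancel mult_less_cancel1)
    ultimately show "k \<in> (\<lambda>t. d * t) ` {1..<n div d}" using t(1) by auto
  next
    fix k assume "k \<in> (\<lambda>t. d * t) ` {1..<n div d}"
    then obtain t where t: "k = d * t" "t \<in> {1..<n div d}" by blast
    then have t: "k = d * t" "1 \<le> t" "t < n div d" by auto
    have "d * t < d * (n div d)" using t(3) d by simp
    then have "d * t < n" using dn by simp
    moreover have "1 \<le> d * t" using t(2) d by (simp add: Suc_le_eq)
    ultimately show "k \<in> {k \<in> {1..<n}. d dvd k}" using t(1) by auto
  qed
  moreover have "inj_on (\<lambda>t. d * t) {1..<n div d}" using d by (auto simp: inj_on_def)
  ultimately show ?thesis by (simp add: card_image)
qed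

lemma card_mult_eq:
  assumes b: "prime b" and p: "p < m"
  shows "card {k \<in> {1..<b ^ m}. multiplicity b k = p} = b ^ (m - p) - b ^ (m - p - 1)"
proof -
  have b1: "b > 1" using b prime_gt_1_nat by blast
  have nu: "\<not> is_unit b" using b1 by simp
  define A where "A = {k \<in> {1..<b ^ m}. b ^ p dvd k}"
  define B where "B = {k \<in> {1..<b ^ m}. b ^ Suc p dvd k}"
  have eq: "{k \<in> {1..<b ^ m}. multiplicity b k = p} = A - B"
  proof (rule set_eqI)
    fix k
    show "k \<in> {k \<in> {1..<b ^ m}. multiplicity b k = p} \<longleftrightarrow> k \<in> A - B"
    proof (cases "k \<in> {1..<b ^ m}")
      case True
      then have knz: "k \<noteq> 0" by auto
      have "b ^ p dvd k \<longleftrightarrow> p \<le> multiplicity b k" by (rule power_dvd_iff_le_multiplicity[OF knz nu])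
      moreover have "b ^ Suc p dvd k \<longleftrightarrow> Suc p \<le> multiplicity b k" by (rule power_dvd_iff_le_multiplicity[OF knz nu])
      ultimately show ?thesis using True unfolding A_def B_def by auto
    qed (auto simp: A_def B_def)
  qed
  have BA: "B \<subseteq> A" unfolding A_def B_def by (auto intro: dvd_trans[OF le_imp_power_dvd[of p "Suc p"]])
  have cA: "card A = b ^ (m - p) - 1"
  proof -
    have "b ^ m = b ^ p * b ^ (m - p)" using p by (simp add: power_add[symmetric])
    then have "b ^ p dvd b ^ m" "b ^ m div b ^ p = b ^ (m - p)" using b1 by auto
    then show ?thesis unfolding A_def using card_multiples[of "b ^ p" "b ^ m"] b1 by simp
  qed
  have cB: "card B = b ^ (m - p - 1) - 1"
  proof -
    have "Suc p + (m - p - 1) = m" using p by simp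
    then have "b ^ m = b ^ Suc p * b ^ (m - p - 1)" by (metis power_add)
    then have "b ^ Suc p dvd b ^ m" "b ^ m div b ^ Suc p = b ^ (m - p - 1)" using b1 by (auto simp del: power_Suc)
    then show ?thesis unfolding B_def using card_multiples[of "b ^ Suc p" "b ^ m"] b1 by (simp del: power_Suc)
  qed
  have fA: "finite A" unfolding A_def by simp
  have pos: "b ^ (m - p - 1) \<ge> 1" using b1 by simp
  show ?thesis unfolding eq using card_Diff_subset[OF finite_subset[OF BA fA] BA] cA cB pos by simp
qed

lemma S_N_nonneg: "0 \<le> S_N n"
  unfolding S_N_CN by (intro sum_nonneg) auto

lemma one_Zset: "prime b \<Longrightarrow> 1 \<in> Zset b m w"
proof -
  assume b: "prime b"
  have b1: "b > 1" using b prime_gt_1_nat by blast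
  show ?thesis
  proof (cases "w < m")
    case True
    have "b ^ 1 \<le> b ^ (m - w)" using True b1 by (intro power_increasing) auto
    then have "2 \<le> b ^ (m - w)" using b1 by simp
    then show ?thesis using True by (simp add: Zset_def)
  qed (simp add: Zset_def)
qed

lemma A_bounds:
  assumes b: "prime b" and k: "k \<in> {1..<b ^ m}" and \<gamma>: "0 < \<gamma> j" "\<gamma> j \<le> 1"
  defines "p \<equiv> multiplicity b k"
  shows "0 \<le> U b m \<gamma> j wj k / W b m wj 0 \<and> U b m \<gamma> j wj k / W b m wj 0 \<le> (if m - p \<le> wj then (1 + \<gamma> j) + \<gamma> j * S_N (b ^ m) else 1 + \<gamma> j)"
proof -
  have b1: "b > 1" using b prime_gt_1_nat by blast
  have knz: "k \<noteq> 0" using k by auto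
  have nu: "\<not> is_unit b" using b1 by simp
  have W0: "W b m wj 0 > 0" by (rule W0_pos[OF b])
  show ?thesis
  proof (cases "m - p \<le> wj")
    case True
    have "m \<le> wj \<or> int (b ^ (m - wj)) dvd int k"
    proof (cases "m \<le> wj")
      case False
      then have "m - wj \<le> p" using True by simp
      then have "b ^ (m - wj) dvd k" unfolding p_def using power_dvd_iff_le_multiplicity[OF knz nu] by blast
      then show ?thesis by (simp only: of_nat_dvd_iff) simp
    qed simp
    then have "U b m \<gamma> j wj k = W b m wj 0 * (1 + \<gamma> j + \<gamma> j * S_N (b ^ m))" by (rule U_full[OF b])
    then have "U b m \<gamma> j wj k / W b m wj 0 = 1 + \<gamma> j + \<gamma> j * S_N (b ^ m)" using W0 by simp
    moreover have "0 \<le> 1 + \<gamma> j + \<gamma> j * S_N (b ^ m)" using \<gamma> S_N_nonneg[of "b ^ m"] by simp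
    ultimately show ?thesis using True by simp
  next
    case False
    then have wm: "wj < m" by simp
    have nd: "\<not> int (b ^ (m - wj)) dvd int k"
    proof
      assume "int (b ^ (m - wj)) dvd int k"
      then have "b ^ (m - wj) dvd k" by (simp only: of_nat_dvd_iff)
      then have "m - wj \<le> p" unfolding p_def using power_dvd_iff_le_multiplicity[OF knz nu] by blast
      then show False using False by simp
    qed
    have "0 \<le> U b m \<gamma> j wj k \<and> U b m \<gamma> j wj k \<le> W b m wj 0 * (1 + \<gamma> j)"
    proof -
      have kk: "1 \<le> k" using k by auto
      show ?thesis by (rule U_partial[where \<gamma>=\<gamma> and j=j, OF b wm kk nd \<gamma>(1) \<gamma>(2)])
    qed
    then show ?thesis using False W0 by (simp add: divide_le_eq mult.commute)
  qed
qed

lemma mult_less: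
  fixes b k m :: nat
  assumes b: "prime b" and k: "k \<in> {1..<b ^ m}"
  shows "multiplicity b k < m"
proof -
  have b1: "b > 1" using b prime_gt_1_nat by blast
  have "b ^ multiplicity b k dvd k" by (rule multiplicity_dvd)
  then have "b ^ multiplicity b k \<le> k" using k by (intro dvd_imp_le) auto
  then have "b ^ multiplicity b k < b ^ m" using k by simp
  then show ?thesis using b1 by (simp add: power_strict_increasing_iff)
qed

lemma ksum_bound:
  assumes b: "prime b" and I: "finite I" and \<gamma>: "\<And>j. j \<in> I \<Longrightarrow> 0 < \<gamma> j \<and> \<gamma> j \<le> 1"
  shows "(\<Sum>k<b ^ m. \<Prod>j\<in>I. U b m \<gamma> j (w j) k / W b m (w j) 0)
    \<le> (\<Prod>j\<in>I. (1 + \<gamma> j) + \<gamma> j * S_N (b ^ m))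
      + (\<Sum>p\<in>{0..<m}. real (b ^ (m - p - 1)) * (real b - 1)
          * (\<Prod>j\<in>{j\<in>I. w j \<ge> m - p}. (1 + \<gamma> j) + \<gamma> j * S_N (b ^ m))
          * (\<Prod>j\<in>{j\<in>I. w j < m - p}. 1 + \<gamma> j))"
proof -
  have b1: "b > 1" using b prime_gt_1_nat by blast
  define A where "A j k = U b m \<gamma> j (w j) k / W b m (w j) 0" for j k
  define c where "c j = (1 + \<gamma> j) + \<gamma> j * S_N (b ^ m)" for j
  define Bp where "Bp p = (\<Prod>j\<in>I. if m - p \<le> w j then c j else 1 + \<gamma> j)" for p
  have A0: "A j 0 = c j" for j
  proof -
    have "U b m \<gamma> j (w j) 0 = W b m (w j) 0 * c j" unfolding c_def by (rule U_full[OF b]) simp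
    then show ?thesis using W0_pos[OF b, of m "w j"] by (simp add: A_def)
  qed
  have Ak: "(\<Prod>j\<in>I. A j k) \<le> Bp (multiplicity b k)" if k: "k \<in> {1..<b ^ m}" for k
    unfolding Bp_def A_def c_def
    by (rule prod_mono) (use A_bounds[OF b k] \<gamma> in auto)
  have split: "{..<b ^ m} = insert 0 {1..<b ^ m}" using b1 by auto
  have "(\<Sum>k<b ^ m. \<Prod>j\<in>I. A j k) = (\<Prod>j\<in>I. A j 0) + (\<Sum>k\<in>{1..<b ^ m}. \<Prod>j\<in>I. A j k)"
    unfolding split by (subst sum.insert) auto
  also have "\<dots> \<le> (\<Prod>j\<in>I. c j) + (\<Sum>k\<in>{1..<b ^ m}. Bp (multiplicity b k))"
    by (intro add_mono sum_mono) (simp_all add: A0 Ak)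
  also have "(\<Sum>k\<in>{1..<b ^ m}. Bp (multiplicity b k)) = (\<Sum>p\<in>{0..<m}. \<Sum>k\<in>{k \<in> {1..<b ^ m}. multiplicity b k = p}. Bp (multiplicity b k))"
    by (rule sum.group[symmetric]) (use mult_less[OF b] in auto)
  also have "\<dots> = (\<Sum>p\<in>{0..<m}. real (b ^ (m - p - 1)) * (real b - 1) * Bp p)"
  proof (rule sum.cong[OF refl])
    fix p assume p: "p \<in> {0..<m}"
    have "(\<Sum>k\<in>{k \<in> {1..<b ^ m}. multiplicity b k = p}. Bp (multiplicity b k)) = (\<Sum>k\<in>{k \<in> {1..<b ^ m}. multiplicity b k = p}. Bp p)"
      by (rule sum.cong) auto
    also have "\<dots> = real (b ^ (m - p) - b ^ (m - p - 1)) * Bp p" using card_mult_eq[OF b, of p m] p by simp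
    also have "real (b ^ (m - p) - b ^ (m - p - 1)) = real (b ^ (m - p - 1)) * (real b - 1)"
    proof -
      have "m - p = Suc (m - p - 1)" using p by simp
      then have e: "b ^ (m - p) = b * b ^ (m - p - 1)" by (metis power_Suc)
      have "b ^ (m - p - 1) \<le> b ^ (m - p)" unfolding e using b1 by simp
      then show ?thesis unfolding e by (simp add: of_nat_diff algebra_simps)
    qed
    finally show "(\<Sum>k\<in>{k \<in> {1..<b ^ m}. multiplicity b k = p}. Bp (multiplicity b k)) = real (b ^ (m - p - 1)) * (real b - 1) * Bp p" .
  qed
  also have "(\<Sum>p\<in>{0..<m}. real (b ^ (m - p - 1)) * (real b - 1) * Bp p)
     = (\<Sum>p\<in>{0..<m}. real (b ^ (m - p - 1)) * (real b - 1)
          * (\<Prod>j\<in>{j\<in>I. w j \<ge> m - p}. (1 + \<gamma> j) + \<gamma> j * S_N (b ^ m))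
          * (\<Prod>j\<in>{j\<in>I. w j < m - p}. 1 + \<gamma> j))"
  proof (rule sum.cong[OF refl])
    fix p
    have "Bp p = (\<Prod>j\<in>I \<inter> {j. m - p \<le> w j}. c j) * (\<Prod>j\<in>I \<inter> - {j. m - p \<le> w j}. 1 + \<gamma> j)"
      unfolding Bp_def by (rule prod.If_cases[OF I])
    moreover have "I \<inter> {j. m - p \<le> w j} = {j\<in>I. w j \<ge> m - p}" by auto
    moreover have "I \<inter> - {j. m - p \<le> w j} = {j\<in>I. w j < m - p}" by auto
    ultimately show "real (b ^ (m - p - 1)) * (real b - 1) * Bp p = real (b ^ (m - p - 1)) * (real b - 1)
          * (\<Prod>j\<in>{j\<in>I. w j \<ge> m - p}. (1 + \<gamma> j) + \<gamma> j * S_N (b ^ m))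
          * (\<Prod>j\<in>{j\<in>I. w j < m - p}. 1 + \<gamma> j)" by (simp add: c_def)
  qed
  finally show ?thesis unfolding A_def c_def .
qed

theorem theorem1:
  fixes b m s :: nat and \<gamma> :: "nat \<Rightarrow> real" and w :: "nat \<Rightarrow> nat"
  assumes "prime b" and "m \<ge> 5" and "s \<ge> 1"
    and "\<And>j. j \<ge> 1 \<Longrightarrow> 0 < \<gamma> j \<and> \<gamma> j \<le> 1"
    and "\<And>i j. 1 \<le> i \<Longrightarrow> i \<le> j \<Longrightarrow> \<gamma> j \<le> \<gamma> i"
    and "\<And>i j. 1 \<le> i \<Longrightarrow> i \<le> j \<Longrightarrow> w i \<le> w j"
  shows "\<exists>zz :: nat \<Rightarrow> nat. (\<forall>j\<in>{1..s}. zz j \<in> Zset b m (w j)) \<and>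
    weighted_star_discr (b ^ m) s \<gamma> (\<lambda>j. b ^ (w j) * zz j)
    \<le> (\<Sum>u\<in>Pow {1..s}. prod_weight \<gamma> u * (1 - (1 - 1 / real (b ^ m)) ^ card u))
       + 1 / 2 * ( 1 / real (b ^ m) * (\<Prod>j\<in>{1..s}. (1 + \<gamma> j) + \<gamma> j * S_N (b ^ m))
         + 1 / real (b ^ m) * (\<Sum>p\<in>{0..<m}. real (b ^ (m - p - 1)) * (real b - 1)
              * (\<Prod>j\<in>{j\<in>{1..s}. w j \<ge> m - p}. (1 + \<gamma> j) + \<gamma> j * S_N (b ^ m))
              * (\<Prod>j\<in>{j\<in>{1..s}. w j < m - p}. 1 + \<gamma> j))
         - (\<Prod>j\<in>{1..s}. 1 + \<gamma> j))"
proof -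
  note b = assms(1)
  have b1: "b > 1" using b prime_gt_1_nat by blast
  define N where "N = b ^ m"
  have N: "N > 0" unfolding N_def using b1 by simp
  define I where "I = {1..s}"
  have I: "finite I" unfolding I_def by simp
  have \<gamma>I: "0 < \<gamma> j \<and> \<gamma> j \<le> 1" if "j \<in> I" for j using assms(4) that by (auto simp: I_def)
  define PS where "PS = PiE I (\<lambda>j. Zset b m (w j))"
  have fZ: "finite (Zset b m wj)" for wj by (simp add: Zset_def)
  have PS: "finite PS" "PS \<noteq> {}" unfolding PS_def using I fZ one_Zset[OF b]
    by (auto simp: finite_PiE PiE_eq_empty_iff)
  define G where "G zz = Gsum N I (\<lambda>j. b ^ w j * zz j) \<gamma>" for zz
  obtain zz where zz: "zz \<in> PS" "G zz \<le> (\<Sum>zz\<in>PS. G zz) / real (card PS)"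
    using exists_le_avg[OF PS] by blast
  define RB where "RB = (\<Prod>j\<in>I. (1 + \<gamma> j) + \<gamma> j * S_N (b ^ m))
      + (\<Sum>p\<in>{0..<m}. real (b ^ (m - p - 1)) * (real b - 1)
          * (\<Prod>j\<in>{j\<in>I. w j \<ge> m - p}. (1 + \<gamma> j) + \<gamma> j * S_N (b ^ m))
          * (\<Prod>j\<in>{j\<in>I. w j < m - p}. 1 + \<gamma> j))"
  have Gbound: "G zz \<le> 1 / real N * RB"
  proof -
    have "(\<Sum>zz\<in>PS. G zz) = 1 / real N * (\<Sum>k<N. \<Prod>j\<in>I. U b m \<gamma> j (w j) k)"
      unfolding PS_def G_def N_def by (rule avg_formula[OF b I])
    moreover have "real (card PS) = (\<Prod>j\<in>I. W b m (w j) 0)"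
      unfolding PS_def using I by (simp add: card_PiE card_Zset[OF b])
    ultimately have "(\<Sum>zz\<in>PS. G zz) / real (card PS) = 1 / real N * (\<Sum>k<N. \<Prod>j\<in>I. U b m \<gamma> j (w j) k / W b m (w j) 0)"
      by (simp add: sum_divide_distrib prod_dividef mult.commute)
    also have "\<dots> \<le> 1 / real N * RB"
      unfolding RB_def N_def using ksum_bound[OF b I \<gamma>I] N by (intro mult_left_mono) auto
    finally show ?thesis using zz(2) by linarith
  qed
  define v where "v j = b ^ w j * zz j" for j
  have Gv: "Gsum N {1..s} v \<gamma> = G zz" unfolding G_def v_def I_def by simp
  define FS where "FS = (\<Sum>u\<in>Pow {1..s}. prod_weight \<gamma> u * (1 - (1 - 1 / real (b ^ m)) ^ card u))"
  define Dset where "Dset = {prod_weight \<gamma> u * \<bar>discr (b ^ m) s v (\<lambda>j. if j \<in> u then x j else 1)\<bar> | x u.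
            (\<forall>j\<in>{1..s}. 0 < x j \<and> x j \<le> 1) \<and> u \<subseteq> {1..s} \<and> u \<noteq> {}}"
  have elem: "d \<le> FS + 1/2 * (Gsum N {1..s} v \<gamma> - (\<Prod>j\<in>{1..s}. 1 + \<gamma> j))" if "d \<in> Dset" for d
  proof -
    obtain x u where d: "d = prod_weight \<gamma> u * \<bar>discr (b ^ m) s v (\<lambda>j. if j \<in> u then x j else 1)\<bar>"
      and x: "\<forall>j\<in>{1..s}. 0 < x j \<and> x j \<le> 1" and u: "u \<subseteq> {1..s}"
      using \<open>d \<in> Dset\<close> unfolding Dset_def by blast
    have "d \<le> prod_weight \<gamma> u * (1 - (1 - 1 / real N) ^ card u) + 1 / 2 * (Gsum N {1..s} v \<gamma> - (\<Prod>j\<in>{1..s}. 1 + \<gamma> j))"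
      unfolding d N_def by (rule disc_elem[OF _ _ u]) (use b1 x \<gamma>I in \<open>auto simp: I_def\<close>)
    also have "prod_weight \<gamma> u * (1 - (1 - 1 / real N) ^ card u) \<le> FS"
      unfolding FS_def N_def
    proof (rule member_le_sum)
      show "u \<in> Pow {1..s}" using u by auto
      show "finite (Pow {1..s})" by simp
      fix u' assume "u' \<in> Pow {1..s} - {u}"
      then have u': "u' \<subseteq> {1..s}" by auto
      have "0 \<le> prod_weight \<gamma> u'" unfolding prod_weight_def
        using \<gamma>I u' by (intro prod_nonneg) (force simp: I_def intro: less_imp_le)
      moreover have "(1 - 1 / real (b ^ m)) ^ card u' \<le> 1"
        using b1 by (intro power_le_one) (auto simp: field_simps)
      ultimately show "0 \<le> prod_weight \<gamma> u' * (1 - (1 - 1 / real (b ^ m)) ^ card u')" by simp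
    qed
    finally show ?thesis by simp
  qed
  have ne: "Dset \<noteq> {}"
  proof -
    have "prod_weight \<gamma> {1} * \<bar>discr (b ^ m) s v (\<lambda>j. if j \<in> {1} then (\<lambda>_. 1::real) j else 1)\<bar> \<in> Dset"
      unfolding Dset_def
      by (rule CollectI, rule exI[of _ "\<lambda>_. 1::real"], rule exI[of _ "{1}"]) (use assms(3) in auto)
    then show ?thesis by blast
  qed
  have "weighted_star_discr (b ^ m) s \<gamma> v = Sup Dset" unfolding weighted_star_discr_def Dset_def ..
  also have "\<dots> \<le> FS + 1/2 * (Gsum N {1..s} v \<gamma> - (\<Prod>j\<in>{1..s}. 1 + \<gamma> j))"
    by (rule cSup_least[OF ne elem])
  also have "\<dots> \<le> FS + 1/2 * (1 / real N * RB - (\<Prod>j\<in>{1..s}. 1 + \<gamma> j))"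
    unfolding Gv using Gbound by (intro add_left_mono mult_left_mono diff_right_mono) auto
  finally have main: "weighted_star_discr (b ^ m) s \<gamma> v \<le> FS + 1/2 * (1 / real N * RB - (\<Prod>j\<in>{1..s}. 1 + \<gamma> j))" .
  have zzZ: "\<forall>j\<in>{1..s}. zz j \<in> Zset b m (w j)" using zz(1) unfolding PS_def I_def by auto
  show ?thesis
    apply (rule exI[of _ zz])
    using zzZ main unfolding v_def FS_def RB_def N_def I_def by (simp add: algebra_simps)
qed

end
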